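(* Let $n\ge2$, $D>0$, $\kappa>0$, and for $t>0$ let $\delta_t=\kappa\sqrt t$. Then there exist $t_1>0$ and $C>0$ (depending on $\kappa$, $n$, $D$) such that $\delta_t<\Delta$ and $$\Big|L^{(n)}_t[\hat s^{(n)}_{t,\delta_t}]-\tfrac{n-1}{n}F(\kappa)\Big|\le C\sqrt t\qquad\text{for all }t\in(0,t_1).$$ (For $n=2$, $D=1$ this reads $\tfrac12F(\kappa)-C\sqrt t\le L_t[\hat s_{t,\delta_t}]\le\tfrac12F(\kappa)+C\sqrt t$.)
   Context: Training set: $y_k=2(k-1)\Delta-D$, $k=1,\dots,n$, where $\Delta=D/(n-1)$; $z_k=y_k+\Delta$ for $k\in[n-1]$. $p_{\mathcal N}(x;\sigma)=(\sqrt{2\pi}\sigma)^{-1}e^{-x^2/(2\sigma^2)}$. For $t>0$, $p^{(n)}_t(x)=\frac1n\sum_{k=1}^np_{\mathcal N}(x-y_k;\sqrt t)$. For measurable $f$, $L^{(n)}_t[f]=t\int|f(x)-\tfrac{d}{dx}\log p^{(n)}_t(x)|^2p^{(n)}_t(x)\,dx$. Smoothed PL-ESF, for $\delta\in(0,\Delta)$: $\hat s^{(n)}_{t,\delta}(x)=(y_1-x)/t$ if $x\le y_1+\delta$; $(y_n-x)/t$ if $x\ge y_n-\delta$; $(y_k-x)/t$ if $x\in[y_k-\delta,y_k+\delta]$ for some $k$; $\frac{\delta}{\Delta-\delta}\cdot\frac{x-z_k}{t}$ if $x\in[y_k+\delta,y_{k+1}-\delta]$ for some $k\in[n-1]$ (a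 continuous piecewise-linear function). $F(\kappa)=2\int_\kappa^\infty(u-\kappa)^2p_{\mathcal N}(u;1)\,du$. *)

theory Defs
  imports "HOL-Analysis.Analysis"
begin

definition gridDelta :: "nat \<Rightarrow> real \<Rightarrow> real" where
  "gridDelta n D = D / (real n - 1)"

definition ypt :: "nat \<Rightarrow> real \<Rightarrow> nat \<Rightarrow> real" where
  "ypt n D k = 2 * (real k - 1) * gridDelta n D - D"

definition zpt :: "nat \<Rightarrow> real \<Rightarrow> nat \<Rightarrow> real" where
  "zpt n D k = ypt n D k + gridDelta n D"

definition pN :: "real \<Rightarrow> real \<Rightarrow> real" where
  "pN x \<sigma> = exp (- (x^2) / (2 * \<sigma>^2)) / (sqrt (2 * pi) * \<sigma>)"

definition pt :: "nat \<Rightarrow> real \<Rightarrow> real \<Rightarrow> real \<Rightarrow> real" where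
  "pt n D t x = (1 / real n) * (\<Sum>k=1..n. pN (x - ypt n D k) (sqrt t))"

definition Lt :: "nat \<Rightarrow> real \<Rightarrow> real \<Rightarrow> (real \<Rightarrow> real) \<Rightarrow> real" where
  "Lt n D t f = t * (\<integral>x. (f x - deriv (\<lambda>u. ln (pt n D t u)) x)^2 * pt n D t x \<partial>lborel)"

definition shat :: "nat \<Rightarrow> real \<Rightarrow> real \<Rightarrow> real \<Rightarrow> real \<Rightarrow> real" where
  "shat n D t \<delta> x =
    (if x \<le> ypt n D 1 + \<delta> then (ypt n D 1 - x) / t
     else if x \<ge> ypt n D n - \<delta> then (ypt n D n - x) / t
     else if (\<exists>k\<in>{1..n}. ypt n D k - \<delta> \<le> x \<and> x \<le> ypt n D k + \<delta>)
       then (let k = (SOME k. k \<in> {1..n} \<and> ypt n D k - \<delta> \<le> x \<and> x \<le> ypt n D k + \<delta>)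
             in (ypt n D k - x) / t)
     else (let k = (SOME k. k \<in> {1..n-1} \<and> ypt n D k + \<delta> \<le> x \<and> x \<le> ypt n D (k+1) - \<delta>)
           in \<delta> / (gridDelta n D - \<delta>) * (x - zpt n D k) / t))"

definition Fk :: "real \<Rightarrow> real" where
  "Fk \<kappa> = 2 * (\<integral>u. indicator {\<kappa>..} u * ((u - \<kappa>)^2 * pN u 1) \<partial>lborel)"

end

theory Submission
  imports Defs "HOL-Probability.Distributions"
begin


lemma pN_normal: "s > 0 \<Longrightarrow> pN (x - y) s = normal_density y s x"
  unfolding pN_def normal_density_def
  by (simp add: real_sqrt_mult power2_eq_square[symmetric] real_sqrt_abs divide_simps)

context
  fixes n :: nat and D :: real
  assumes n2: "n \<ge> 2" and Dp: "D > 0"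
begin

lemma Dlt_pos: "gridDelta n D > 0"
  using n2 Dp unfolding gridDelta_def by auto

lemma y_diff: "ypt n D k - ypt n D j = 2 * (real k - real j) * gridDelta n D"
  unfolding ypt_def by (simp add: algebra_simps)

lemma y_1: "ypt n D 1 = - D"
  unfolding ypt_def by simp

lemma y_n: "ypt n D n = D"
proof -
  have "(real n - 1) * gridDelta n D = D" using n2 unfolding gridDelta_def by auto
  then show ?thesis unfolding ypt_def by (simp add: algebra_simps)
qed

lemma y_sep: "k < j \<Longrightarrow> ypt n D k + 2 * gridDelta n D \<le> ypt n D j"
proof -
  assume "k < j"
  then have "real j - real k \<ge> 1" by linarith
  then have "2 * gridDelta n D \<le> 2 * (real j - real k) * gridDelta n D"
    using Dlt_pos by (simp add: mult_right_mono)
  then show ?thesis using y_diff[of j k] by linarith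
qed

lemma y_mono: "k \<le> j \<Longrightarrow> ypt n D k \<le> ypt n D j"
  using y_sep[of k j] Dlt_pos by (cases "k = j") auto

lemma y_Suc: "ypt n D (Suc k) = ypt n D k + 2 * gridDelta n D"
  unfolding ypt_def by (simp add: algebra_simps)

lemma y_bound: "k \<in> {1..n} \<Longrightarrow> \<bar>ypt n D k\<bar> \<le> D"
  using y_mono[of 1 k] y_mono[of k n] y_1 y_n by auto

lemma z_def': "zpt n D k = ypt n D k + gridDelta n D"
  by (simp add: zpt_def)

context
  fixes t \<delta> :: real
  assumes tp: "t > 0" and dp: "\<delta> > 0" and dle: "2 * \<delta> \<le> gridDelta n D"
begin

lemma cell_unique:
  assumes "\<bar>x - ypt n D k\<bar> \<le> \<delta>" "\<bar>x - ypt n D j\<bar> \<le> \<delta>"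
  shows "k = j"
proof (rule ccontr)
  assume "k \<noteq> j"
  then have "k < j \<or> j < k" by auto
  then show False using y_sep[of k j] y_sep[of j k] assms dle dp by auto
qed

lemma shat_left:
  assumes "x \<le> ypt n D 1 + \<delta>"
  shows "shat n D t \<delta> x = (ypt n D 1 - x) / t"
  using assms unfolding shat_def by simp

lemma shat_right:
  assumes "x \<ge> ypt n D n - \<delta>"
  shows "shat n D t \<delta> x = (ypt n D n - x) / t"
proof -
  have "ypt n D 1 + 2 * gridDelta n D \<le> ypt n D n" using y_sep[of 1 n] n2 by auto
  then have "\<not> x \<le> ypt n D 1 + \<delta>" using assms dle dp by auto
  then show ?thesis using assms unfolding shat_def by simp
qed

lemma shat_cell:
  assumes k: "k \<in> {1..n}" and x: "\<bar>x - ypt n D k\<bar> \<le> \<delta>"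
  shows "shat n D t \<delta> x = (ypt n D k - x) / t"
proof (cases "x \<le> ypt n D 1 + \<delta>")
  case True
  have "k = 1"
  proof (rule ccontr)
    assume "k \<noteq> 1" then have "1 < k" using k by auto
    then show False using y_sep[of 1 k] x True dp dle by auto
  qed
  then show ?thesis using shat_left True by simp
next
  case F1: False
  show ?thesis
  proof (cases "x \<ge> ypt n D n - \<delta>")
    case True
    have "k = n"
    proof (rule ccontr)
      assume "k \<noteq> n" then have "k < n" using k by auto
      then show False using y_sep[of k n] x True dp dle by auto
    qed
    then show ?thesis using shat_right True by simp
  next
    case F2: False
    have ex: "\<exists>k\<in>{1..n}. ypt n D k - \<delta> \<le> x \<and> x \<le> ypt n D k + \<delta>" using k x by (intro bexI[of _ k]) auto
    define k' where "k' = (SOME k. k \<in> {1..n} \<and> ypt n D k - \<delta> \<le> x \<and> x \<le> ypt n D k + \<delta>)"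
    have "k' \<in> {1..n} \<and> ypt n D k' - \<delta> \<le> x \<and> x \<le> ypt n D k' + \<delta>"
      unfolding k'_def by (rule someI_ex) (use ex in blast)
    then have "k' = k" using cell_unique[of x k' k] x by auto
    then show ?thesis using F1 F2 ex unfolding shat_def k'_def[symmetric] by (simp add: Let_def)
  qed
qed

lemma gap_unique:
  assumes "ypt n D k + \<delta> \<le> x" "x \<le> ypt n D (Suc k) - \<delta>"
    "ypt n D j + \<delta> \<le> x" "x \<le> ypt n D (Suc j) - \<delta>"
  shows "k = j"
proof (rule ccontr)
  assume "k \<noteq> j"
  then have "Suc k \<le> j \<or> Suc j \<le> k" by auto
  then show False using y_mono[of "Suc k" j] y_mono[of "Suc j" k] assms dp by auto
qed

lemma shat_gap:
  assumes k: "k \<in> {1..n-1}" and x1: "ypt n D k + \<delta> \<le> x" and x2: "x \<le> ypt n D (k+1) - \<delta>"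
  shows "shat n D t \<delta> x = \<delta> / (gridDelta n D - \<delta>) * (x - zpt n D k) / t"
proof -
  have Dd: "gridDelta n D - \<delta> > 0" using dle dp by auto
  have key: "\<delta> / (gridDelta n D - \<delta>) * (gridDelta n D - \<delta>) = \<delta>" using Dd by simp
  have left_val: "\<delta> / (gridDelta n D - \<delta>) * (ypt n D k + \<delta> - zpt n D k) / t = (ypt n D k - (ypt n D k + \<delta>)) / t"
  proof -
    have eq: "ypt n D k + \<delta> - zpt n D k = - (gridDelta n D - \<delta>)" unfolding zpt_def by simp
    have e: "\<delta> / (gridDelta n D - \<delta>) * (- (gridDelta n D - \<delta>)) = - \<delta>" using key by (simp only: mult_minus_right)
    show ?thesis unfolding eq e by simp
  qed
  have right_val: "\<delta> / (gridDelta n D - \<delta>) * (ypt n D (k+1) - \<delta> - zpt n D k) / t = (ypt n D (k+1) - (ypt n D (k+1) - \<delta>)) / t"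
  proof -
    have eq: "ypt n D (k+1) - \<delta> - zpt n D k = (gridDelta n D - \<delta>)" unfolding zpt_def by (simp add: y_Suc)
    show ?thesis unfolding eq key by simp
  qed
  show ?thesis
  proof (cases "x \<le> ypt n D 1 + \<delta>")
    case True
    have "k = 1" using k y_sep[of 1 k] x1 True dp Dlt_pos by (cases "k = 1") auto
    then have "x = ypt n D k + \<delta>" using True x1 by auto
    then show ?thesis using shat_left True left_val \<open>k = 1\<close> by simp
  next
    case F1: False
    show ?thesis
    proof (cases "x \<ge> ypt n D n - \<delta>")
      case True
      have "k + 1 \<le> n" using k n2 by auto
      then have "k + 1 = n" using y_sep[of "k+1" n] x2 True dp Dlt_pos
        by (cases "k + 1 = n") auto
      then have "x = ypt n D (k+1) - \<delta>" using True x2 by auto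
      then show ?thesis using shat_right True right_val \<open>k + 1 = n\<close> by simp
    next
      case F2: False
      show ?thesis
      proof (cases "\<exists>k\<in>{1..n}. ypt n D k - \<delta> \<le> x \<and> x \<le> ypt n D k + \<delta>")
        case True
        then obtain k' where k': "k' \<in> {1..n}" "\<bar>x - ypt n D k'\<bar> \<le> \<delta>" by auto
        have "shat n D t \<delta> x = (ypt n D k' - x) / t" by (rule shat_cell[OF k'])
        moreover have "(k' = k \<and> x = ypt n D k + \<delta>) \<or> (k' = k + 1 \<and> x = ypt n D (k+1) - \<delta>)"
        proof -
          have "k' < k \<or> k' = k \<or> k' = k + 1 \<or> k + 1 < k'" by auto
          moreover have "\<not> k' < k" using y_sep[of k' k] k'(2) x1 dp dle by auto
          moreover have "\<not> k + 1 < k'" using y_sep[of "k+1" k'] k'(2) x2 dp dle by auto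
          ultimately show ?thesis using k'(2) x1 x2 by auto
        qed
        ultimately show ?thesis using left_val right_val by auto
      next
        case F3: False
        have ex: "\<exists>j. j \<in> {1..n-1} \<and> ypt n D j + \<delta> \<le> x \<and> x \<le> ypt n D (j+1) - \<delta>"
          using k x1 x2 by blast
        define k' where "k' = (SOME j. j \<in> {1..n-1} \<and> ypt n D j + \<delta> \<le> x \<and> x \<le> ypt n D (j+1) - \<delta>)"
        have "k' \<in> {1..n-1} \<and> ypt n D k' + \<delta> \<le> x \<and> x \<le> ypt n D (k'+1) - \<delta>"
          unfolding k'_def by (rule someI_ex) (use ex in blast)
        then have "k' = k" using gap_unique[of k' x k] x1 x2 by auto
        moreover have "shat n D t \<delta> x = (let k = k' in \<delta> / (gridDelta n D - \<delta>) * (x - zpt n D k) / t)"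
          unfolding shat_def k'_def by (simp only: F1 F2 F3 if_False)
        ultimately show ?thesis by (simp add: Let_def)
      qed
    qed
  qed
qed

end
end


context
  fixes n :: nat and D t \<delta> :: real
  assumes n2: "n \<ge> 2" and Dp: "D > 0" and tp: "t > 0" and dp: "\<delta> > 0" and dle: "2 * \<delta> \<le> gridDelta n D"
begin

lemma cover:
  "x \<le> ypt n D 1 + \<delta> \<or> x \<ge> ypt n D n - \<delta> \<or> (\<exists>k\<in>{1..n}. \<bar>x - ypt n D k\<bar> \<le> \<delta>) \<or>
   (\<exists>k\<in>{1..n-1}. ypt n D k + \<delta> \<le> x \<and> x \<le> ypt n D (k+1) - \<delta>)"
proof (cases "x \<le> ypt n D 1 + \<delta> \<or> x \<ge> ypt n D n - \<delta>")
  case True then show ?thesis by blast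
next
  case False
  define S where "S = {k\<in>{1..n}. ypt n D k \<le> x}"
  have finS: "finite S" unfolding S_def by auto
  have "1 \<in> S" using False dp n2 unfolding S_def by auto
  then have neS: "S \<noteq> {}" by auto
  define K where "K = Max S"
  have KS: "K \<in> S" unfolding K_def using finS neS by (rule Max_in)
  have "K \<noteq> n" using KS False dp unfolding S_def by auto
  then have K1: "K \<in> {1..n-1}" using KS unfolding S_def by auto
  have "K + 1 \<notin> S" using Max_ge[OF finS, of "K+1"] unfolding K_def[symmetric] by auto
  then have xlt: "x < ypt n D (K+1)" using K1 unfolding S_def by auto
  have xge: "ypt n D K \<le> x" using KS unfolding S_def by auto
  show ?thesis
  proof (cases "x \<le> ypt n D K + \<delta>")
    case True then show ?thesis using xge K1 by (intro disjI2 disjI2 disjI1 bexI[of _ K]) auto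
  next
    case F: False
    show ?thesis
    proof (cases "x \<ge> ypt n D (K+1) - \<delta>")
      case True then show ?thesis using xlt K1 by (intro disjI2 disjI2 disjI1 bexI[of _ "K+1"]) auto
    next
      case False then show ?thesis using F K1 by (intro disjI2 disjI2 disjI2 bexI[of _ K]) auto
    qed
  qed
qed

lemma shat_bound: "\<bar>shat n D t \<delta> x\<bar> \<le> (\<bar>x\<bar> + D) / t"
proof -
  have Dd: "gridDelta n D - \<delta> > 0" using dle dp by auto
  from cover[of x] consider (L) "x \<le> ypt n D 1 + \<delta>" | (R) "x \<ge> ypt n D n - \<delta>"
    | (C) k where "k\<in>{1..n}" "\<bar>x - ypt n D k\<bar> \<le> \<delta>"
    | (G) k where "k\<in>{1..n-1}" "ypt n D k + \<delta> \<le> x" "x \<le> ypt n D (k+1) - \<delta>" by blast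
  then show ?thesis
  proof cases
    case L
    then have "shat n D t \<delta> x = (ypt n D 1 - x) / t" using shat_left[OF n2 Dp tp dp dle] by simp
    moreover have "\<bar>ypt n D 1 - x\<bar> \<le> \<bar>x\<bar> + D" using Dp by (subst y_1[OF n2 Dp]) arith
    ultimately show ?thesis using tp by (simp add: divide_right_mono)
  next
    case R
    then have "shat n D t \<delta> x = (ypt n D n - x) / t" using shat_right[OF n2 Dp tp dp dle] by simp
    moreover have "\<bar>ypt n D n - x\<bar> \<le> \<bar>x\<bar> + D" using Dp by (subst y_n[OF n2 Dp]) arith
    ultimately show ?thesis using tp by (simp add: divide_right_mono)
  next
    case (C k)
    then have "shat n D t \<delta> x = (ypt n D k - x) / t" using shat_cell[OF n2 Dp tp dp dle] by simp
    moreover have "\<bar>ypt n D k - x\<bar> \<le> \<bar>x\<bar> + D" using y_bound[OF n2 Dp C(1)] by linarith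
    ultimately show ?thesis using tp by (simp add: divide_right_mono)
  next
    case (G k)
    then have e: "shat n D t \<delta> x = \<delta> / (gridDelta n D - \<delta>) * (x - zpt n D k) / t"
      using shat_gap[OF n2 Dp tp dp dle] by simp
    have k1: "k \<in> {1..n}" "k+1 \<in> {1..n}" using G(1) n2 by auto
    have "\<bar>zpt n D k\<bar> \<le> D" using y_bound[OF n2 Dp k1(1)] y_bound[OF n2 Dp k1(2)]
      y_Suc[OF n2 Dp, of k] Dlt_pos[OF n2 Dp] unfolding zpt_def by auto
    then have a: "\<bar>x - zpt n D k\<bar> \<le> \<bar>x\<bar> + D" by linarith
    have b: "\<delta> / (gridDelta n D - \<delta>) \<le> 1" using Dd dle dp by (simp add: divide_simps)
    have "\<bar>\<delta> / (gridDelta n D - \<delta>) * (x - zpt n D k)\<bar> \<le> 1 * (\<bar>x\<bar> + D)"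
      unfolding abs_mult using a b Dd dp by (intro mult_mono) auto
    then have "\<bar>\<delta> / (gridDelta n D - \<delta>) * (x - zpt n D k)\<bar> / t \<le> (\<bar>x\<bar> + D) / t"
      using tp by (intro divide_right_mono) auto
    then show ?thesis by (simp only: e abs_divide abs_of_pos[OF tp])
  qed
qed

lemma shat_measurable: "shat n D t \<delta> \<in> borel_measurable lborel"
proof -
  define C where "C = {{..ypt n D 1 + \<delta>}, {ypt n D n - \<delta>..}} \<union>
     (\<lambda>k. {ypt n D k - \<delta> .. ypt n D k + \<delta>}) ` {1..n} \<union>
     (\<lambda>k. {ypt n D k + \<delta> .. ypt n D (k+1) - \<delta>}) ` {1..n-1}"
  show ?thesis
  proof (rule measurable_piecewise_restrict[of C])
  show "countable C" unfolding C_def by (intro countable_finite) auto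
  show "\<And>\<Omega>. \<Omega> \<in> C \<Longrightarrow> \<Omega> \<inter> space lborel \<in> sets lborel" unfolding C_def by auto
  show "space lborel \<subseteq> \<Union>C"
  proof
    fix x :: real assume "x \<in> space lborel"
    from cover[of x] consider (L) "x \<le> ypt n D 1 + \<delta>" | (R) "x \<ge> ypt n D n - \<delta>"
    | (Cl) k where "k\<in>{1..n}" "\<bar>x - ypt n D k\<bar> \<le> \<delta>"
    | (G) k where "k\<in>{1..n-1}" "ypt n D k + \<delta> \<le> x" "x \<le> ypt n D (k+1) - \<delta>" by blast
    then show "x \<in> \<Union>C"
    proof cases
      case (Cl k)
      then have "{ypt n D k - \<delta> .. ypt n D k + \<delta>} \<in> C" "x \<in> {ypt n D k - \<delta> .. ypt n D k + \<delta>}"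
        unfolding C_def by (auto simp: abs_le_iff)
      then show ?thesis by blast
    next
      case (G k)
      then have "{ypt n D k + \<delta> .. ypt n D (k+1) - \<delta>} \<in> C" "x \<in> {ypt n D k + \<delta> .. ypt n D (k+1) - \<delta>}"
        unfolding C_def by auto
      then show ?thesis by blast
    qed (auto simp: C_def)
  qed
  fix \<Omega> assume "\<Omega> \<in> C"
  then consider (L) "\<Omega> = {..ypt n D 1 + \<delta>}" | (R) "\<Omega> = {ypt n D n - \<delta>..}"
    | (Cl) k where "k\<in>{1..n}" "\<Omega> = {ypt n D k - \<delta> .. ypt n D k + \<delta>}"
    | (G) k where "k\<in>{1..n-1}" "\<Omega> = {ypt n D k + \<delta> .. ypt n D (k+1) - \<delta>}"
    unfolding C_def by blast
  then show "shat n D t \<delta> \<in> borel_measurable (restrict_space lborel \<Omega>)"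
  proof cases
    case L
    have "shat n D t \<delta> \<in> borel_measurable (restrict_space lborel \<Omega>) \<longleftrightarrow>
          (\<lambda>x. (ypt n D 1 - x) / t) \<in> borel_measurable (restrict_space lborel \<Omega>)"
      by (rule measurable_cong) (use L shat_left[OF n2 Dp tp dp dle] in \<open>auto simp: space_restrict_space\<close>)
    then show ?thesis by (simp add: measurable_restrict_space1)
  next
    case R
    have "shat n D t \<delta> \<in> borel_measurable (restrict_space lborel \<Omega>) \<longleftrightarrow>
          (\<lambda>x. (ypt n D n - x) / t) \<in> borel_measurable (restrict_space lborel \<Omega>)"
      by (rule measurable_cong) (use R shat_right[OF n2 Dp tp dp dle] in \<open>auto simp: space_restrict_space\<close>)
    then show ?thesis by (simp add: measurable_restrict_space1)
  next
    case (Cl k)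
    have "shat n D t \<delta> \<in> borel_measurable (restrict_space lborel \<Omega>) \<longleftrightarrow>
          (\<lambda>x. (ypt n D k - x) / t) \<in> borel_measurable (restrict_space lborel \<Omega>)"
      by (rule measurable_cong) (use Cl shat_cell[OF n2 Dp tp dp dle] in \<open>auto simp: space_restrict_space abs_le_iff\<close>)
    then show ?thesis by (simp add: measurable_restrict_space1)
  next
    case (G k)
    have "shat n D t \<delta> \<in> borel_measurable (restrict_space lborel \<Omega>) \<longleftrightarrow>
          (\<lambda>x. \<delta> / (gridDelta n D - \<delta>) * (x - zpt n D k) / t) \<in> borel_measurable (restrict_space lborel \<Omega>)"
      by (rule measurable_cong) (use G shat_gap[OF n2 Dp tp dp dle] in \<open>auto simp: space_restrict_space\<close>)
    then show ?thesis by (simp add: measurable_restrict_space1)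
  qed
  qed
qed

end


definition Phi :: "nat \<Rightarrow> real \<Rightarrow> real \<Rightarrow> real \<Rightarrow> nat \<Rightarrow> real \<Rightarrow> real" where
  "Phi n D \<kappa> \<sigma> j u = \<sigma> * shat n D (\<sigma>^2) (\<kappa>*\<sigma>) (ypt n D j + \<sigma>*u) + u"

definition Tj :: "nat \<Rightarrow> real \<Rightarrow> nat \<Rightarrow> real \<Rightarrow> real" where
  "Tj n \<kappa> j u = (if j < n \<and> \<kappa> \<le> u then u - \<kappa> else 0) + (if 1 < j \<and> u \<le> -\<kappa> then u + \<kappa> else 0)"

definition Sj :: "nat \<Rightarrow> real \<Rightarrow> nat \<Rightarrow> real \<Rightarrow> real" where
  "Sj n \<kappa> j u = (if j < n \<and> \<kappa> \<le> u then (u - \<kappa>)^2 else 0) + (if 1 < j \<and> u \<le> -\<kappa> then (u + \<kappa>)^2 else 0)"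

lemma Tj_sq: "\<kappa> > 0 \<Longrightarrow> (Tj n \<kappa> j u)^2 = Sj n \<kappa> j u"
  unfolding Tj_def Sj_def by auto

lemma Sj_nonneg: "Sj n \<kappa> j u \<ge> 0"
  unfolding Sj_def by auto

context
  fixes n :: nat and D \<kappa> \<sigma> :: real
  assumes n2: "n \<ge> 2" and Dp: "D > 0" and kp: "\<kappa> > 0" and sp: "\<sigma> > 0"
    and dle: "2 * (\<kappa> * \<sigma>) \<le> gridDelta n D"
begin

lemma tp': "\<sigma>^2 > 0" using sp by simp
lemma dp': "\<kappa> * \<sigma> > 0" using sp kp by simp

lemmas facts = n2 Dp tp' dp' dle

lemma Phi_exact:
  assumes j: "j \<in> {1..n}" and u: "\<bar>u\<bar> \<le> gridDelta n D / \<sigma>"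
  shows "Phi n D \<kappa> \<sigma> j u = gridDelta n D / (gridDelta n D - \<kappa>*\<sigma>) * Tj n \<kappa> j u"
proof -
  define \<Delta> where "\<Delta> = gridDelta n D"
  have Dpos: "\<Delta> > 0" unfolding \<Delta>_def using Dlt_pos[OF n2 Dp] .
  have Dd: "\<Delta> - \<kappa>*\<sigma> > 0" using dle dp' unfolding \<Delta>_def by auto
  have uM: "\<sigma> * \<bar>u\<bar> \<le> \<Delta>" using u sp unfolding \<Delta>_def by (simp add: field_simps)
  define x where "x = ypt n D j + \<sigma>*u"
  have Phx: "Phi n D \<kappa> \<sigma> j u = \<sigma> * shat n D (\<sigma>^2) (\<kappa>*\<sigma>) x + u" unfolding Phi_def x_def ..
  consider (c) "\<bar>u\<bar> \<le> \<kappa>" | (r) "\<kappa> < u" | (l) "u < -\<kappa>" by linarith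
  then show ?thesis
  proof cases
    case c
    have "\<bar>x - ypt n D j\<bar> \<le> \<kappa>*\<sigma>" unfolding x_def using c sp by (simp add: abs_mult)
    then have "shat n D (\<sigma>^2) (\<kappa>*\<sigma>) x = (ypt n D j - x) / \<sigma>^2" using shat_cell[OF facts j] by simp
    then have "Phi n D \<kappa> \<sigma> j u = 0" unfolding Phx x_def using sp by (simp add: power2_eq_square)
    moreover have "Tj n \<kappa> j u = 0" unfolding Tj_def using c by auto
    ultimately show ?thesis by simp
  next
    case r
    show ?thesis
    proof (cases "j < n")
      case True
      have j1: "j \<in> {1..n-1}" using j True by auto
      have a: "ypt n D j + \<kappa>*\<sigma> \<le> x" unfolding x_def using r sp by simp
      have b: "x \<le> ypt n D (j+1) - \<kappa>*\<sigma>" unfolding x_def using uM dle y_Suc[OF n2 Dp, of j] r kp dp'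
        unfolding \<Delta>_def by auto
      have "shat n D (\<sigma>^2) (\<kappa>*\<sigma>) x = \<kappa>*\<sigma> / (\<Delta> - \<kappa>*\<sigma>) * (x - zpt n D j) / \<sigma>^2"
        using shat_gap[OF facts j1 a b] unfolding \<Delta>_def .
      then have "Phi n D \<kappa> \<sigma> j u = \<kappa>*\<sigma> / (\<Delta> - \<kappa>*\<sigma>) * (\<sigma>*u - \<Delta>) / \<sigma> + u"
        unfolding Phx x_def zpt_def \<Delta>_def using sp by (simp add: power2_eq_square)
      also have "\<dots> = \<Delta> / (\<Delta> - \<kappa>*\<sigma>) * (u - \<kappa>)" using sp Dd by (simp add: field_simps)
      finally show ?thesis unfolding Tj_def \<Delta>_def using True r kp by auto
    next
      case False
      then have jn: "j = n" using j by auto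
      have "\<sigma>*\<kappa> \<le> \<sigma>*u" by (rule mult_left_mono) (use r sp in auto)
      then have "x \<ge> ypt n D n - \<kappa>*\<sigma>" unfolding x_def jn using dp' by (simp add: algebra_simps)
      then have "shat n D (\<sigma>^2) (\<kappa>*\<sigma>) x = (ypt n D n - x) / \<sigma>^2" using shat_right[OF facts] by simp
      then have "Phi n D \<kappa> \<sigma> j u = 0" unfolding Phx using sp jn by (simp add: x_def power2_eq_square)
      moreover have "Tj n \<kappa> j u = 0" unfolding Tj_def using r jn kp by auto
      ultimately show ?thesis by simp
    qed
  next
    case l
    show ?thesis
    proof (cases "1 < j")
      case True
      define k where "k = j - 1"
      have kj: "j = k + 1" unfolding k_def using True by auto
      have k1: "k \<in> {1..n-1}" using j True unfolding k_def by auto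
      have yk: "ypt n D j = ypt n D k + 2*\<Delta>" unfolding kj \<Delta>_def using y_Suc[OF n2 Dp, of k] by simp
      have "\<sigma>*(-u) \<le> \<sigma>*\<bar>u\<bar>" by (rule mult_left_mono) (use sp in auto)
      then have "-(\<sigma>*u) \<le> \<Delta>" using uM by simp
      moreover have "\<kappa>*\<sigma> \<le> \<Delta>" using dle dp' unfolding \<Delta>_def by simp
      ultimately have a: "ypt n D k + \<kappa>*\<sigma> \<le> x" unfolding x_def yk by simp
      have "\<sigma>*u \<le> \<sigma>*(-\<kappa>)" by (rule mult_left_mono) (use l sp in auto)
      then have b: "x \<le> ypt n D (k+1) - \<kappa>*\<sigma>" unfolding x_def kj[symmetric]
        by (simp add: algebra_simps)
      have "shat n D (\<sigma>^2) (\<kappa>*\<sigma>) x = \<kappa>*\<sigma> / (\<Delta> - \<kappa>*\<sigma>) * (x - zpt n D k) / \<sigma>^2"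
        using shat_gap[OF facts k1 a b] unfolding \<Delta>_def .
      then have "Phi n D \<kappa> \<sigma> j u = \<kappa>*\<sigma> / (\<Delta> - \<kappa>*\<sigma>) * (\<sigma>*u + \<Delta>) / \<sigma> + u"
        unfolding Phx x_def zpt_def yk using sp unfolding \<Delta>_def by (simp add: power2_eq_square)
      also have "\<dots> = \<Delta> / (\<Delta> - \<kappa>*\<sigma>) * (u + \<kappa>)" using sp Dd by (simp add: field_simps)
      finally show ?thesis unfolding Tj_def \<Delta>_def using True l kp by auto
    next
      case False
      then have jn: "j = 1" using j by auto
      have "\<sigma>*u \<le> \<sigma>*(-\<kappa>)" by (rule mult_left_mono) (use l sp in auto)
      then have "x \<le> ypt n D 1 + \<kappa>*\<sigma>" unfolding x_def jn using dp' by (simp add: algebra_simps)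
      then have "shat n D (\<sigma>^2) (\<kappa>*\<sigma>) x = (ypt n D 1 - x) / \<sigma>^2" using shat_left[OF facts] by simp
      then have "Phi n D \<kappa> \<sigma> j u = 0" unfolding Phx using sp jn by (simp add: x_def power2_eq_square)
      moreover have "Tj n \<kappa> j u = 0" unfolding Tj_def using l jn kp by auto
      ultimately show ?thesis by simp
    qed
  qed
qed

lemma Phi_bound:
  assumes j: "j \<in> {1..n}"
  shows "\<bar>Phi n D \<kappa> \<sigma> j u\<bar> \<le> 2*\<bar>u\<bar> + 2*D/\<sigma>"
proof -
  define x where "x = ypt n D j + \<sigma>*u"
  have "\<bar>\<sigma>*u\<bar> = \<sigma>*\<bar>u\<bar>" using sp by (simp add: abs_mult)
  then have hx: "\<bar>x\<bar> \<le> D + \<sigma>*\<bar>u\<bar>" unfolding x_def using y_bound[OF n2 Dp j]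
    abs_triangle_ineq[of "ypt n D j" "\<sigma>*u"] by linarith
  have "\<bar>shat n D (\<sigma>^2) (\<kappa>*\<sigma>) x\<bar> \<le> (\<bar>x\<bar> + D) / \<sigma>^2" by (rule shat_bound[OF facts])
  then have "\<sigma> * \<bar>shat n D (\<sigma>^2) (\<kappa>*\<sigma>) x\<bar> \<le> \<sigma> * ((\<bar>x\<bar> + D) / \<sigma>^2)"
    by (rule mult_left_mono) (use sp in auto)
  also have "\<dots> = (\<bar>x\<bar> + D) / \<sigma>" using sp by (simp add: power2_eq_square)
  also have "\<dots> \<le> (2*D + \<sigma>*\<bar>u\<bar>) / \<sigma>" using hx sp by (simp add: divide_right_mono)
  also have "\<dots> = 2*D/\<sigma> + \<bar>u\<bar>" using sp by (simp add: field_simps)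
  finally have "\<bar>\<sigma> * shat n D (\<sigma>^2) (\<kappa>*\<sigma>) x\<bar> \<le> 2*D/\<sigma> + \<bar>u\<bar>" using sp by (simp add: abs_mult)
  then show ?thesis unfolding Phi_def x_def[symmetric] by linarith
qed

lemma Phi_far:
  assumes j: "j \<in> {1..n}" and u: "\<bar>u\<bar> \<ge> gridDelta n D / \<sigma>"
  shows "(Phi n D \<kappa> \<sigma> j u)^2 \<le> (2 + 2*D/gridDelta n D)^2 * \<sigma> * \<bar>u\<bar>^3 / gridDelta n D"
proof -
  define \<Delta> where "\<Delta> = gridDelta n D"
  have Dpos: "\<Delta> > 0" unfolding \<Delta>_def using Dlt_pos[OF n2 Dp] .
  have uM: "\<Delta> \<le> \<sigma> * \<bar>u\<bar>" using u sp unfolding \<Delta>_def by (simp add: field_simps)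
  have "2*D/\<sigma> \<le> (2*D/\<Delta>) * \<bar>u\<bar>"
  proof -
    have "2*D/\<sigma> = (2*D/\<Delta>) * (\<Delta>/\<sigma>)" using Dpos sp by simp
    also have "\<dots> \<le> (2*D/\<Delta>) * \<bar>u\<bar>" using uM sp Dpos Dp
      by (intro mult_left_mono) (auto simp: field_simps)
    finally show ?thesis .
  qed
  then have "\<bar>Phi n D \<kappa> \<sigma> j u\<bar> \<le> (2 + 2*D/\<Delta>) * \<bar>u\<bar>" using Phi_bound[OF j, of u] by (simp add: algebra_simps)
  then have "(Phi n D \<kappa> \<sigma> j u)^2 \<le> ((2 + 2*D/\<Delta>) * \<bar>u\<bar>)^2"
    by (metis abs_ge_zero order_trans power2_abs power_mono)
  also have "\<dots> = (2 + 2*D/\<Delta>)^2 * (\<bar>u\<bar>^2 * 1)" by (simp add: power_mult_distrib)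
  also have "\<dots> \<le> (2 + 2*D/\<Delta>)^2 * (\<bar>u\<bar>^2 * (\<sigma> * \<bar>u\<bar> / \<Delta>))"
    using uM Dpos by (intro mult_left_mono) (auto simp: field_simps)
  also have "\<dots> = (2 + 2*D/\<Delta>)^2 * \<sigma> * \<bar>u\<bar>^3 / \<Delta>" by (simp add: power3_eq_cube power2_eq_square)
  finally show ?thesis unfolding \<Delta>_def .
qed

end


lemma pN1: "pN u 1 = std_normal_density u"
  using pN_normal[of 1 u 0] by simp

lemma int_sq_phi: "integrable lborel (\<lambda>u. (u - c)^2 * std_normal_density u)"
proof -
  have "integrable lborel (\<lambda>u. std_normal_density u * u^2 - 2*c * (std_normal_density u * u^1) + c^2 * std_normal_density u)"
  proof -
    have a: "integrable lborel (\<lambda>u. std_normal_density u * u^2)" by (rule integrable_std_normal_moment)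
    have b: "integrable lborel (\<lambda>u. std_normal_density u * u^1)" by (rule integrable_std_normal_moment)
    have c: "integrable lborel (\<lambda>u. std_normal_density u)" by (rule integrable_normal_density) simp
    show ?thesis by (intro Bochner_Integration.integrable_add Bochner_Integration.integrable_diff integrable_mult_right a b c)
  qed
  moreover have "(\<lambda>u. (u - c)^2 * std_normal_density u) = (\<lambda>u. std_normal_density u * u^2 - 2*c * (std_normal_density u * u^1) + c^2 * std_normal_density u)"
    by (auto simp: fun_eq_iff power2_eq_square algebra_simps)
  ultimately show ?thesis by simp
qed

definition I1 :: "real \<Rightarrow> real \<Rightarrow> real" where
  "I1 \<kappa> u = indicator {\<kappa>..} u * ((u - \<kappa>)^2 * pN u 1)"

definition I2 :: "real \<Rightarrow> real \<Rightarrow> real" where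
  "I2 \<kappa> u = indicator {..-\<kappa>} u * ((u + \<kappa>)^2 * pN u 1)"

lemma int_I1: "integrable lborel (I1 \<kappa>)"
proof -
  have "integrable lborel (\<lambda>u. indicator {\<kappa>..} u *\<^sub>R ((u - \<kappa>)^2 * std_normal_density u))"
    by (rule integrable_mult_indicator) (auto intro: int_sq_phi)
  then show ?thesis unfolding I1_def pN1 by simp
qed

lemma I2_I1: "I2 \<kappa> (0 + (-1) * u) = I1 \<kappa> u"
proof -
  have "std_normal_density (-u) = std_normal_density u" unfolding std_normal_density_def by simp
  moreover have "(- u \<in> {..-\<kappa>}) = (u \<in> {\<kappa>..})" by auto
  moreover have "(-u + \<kappa>)^2 = (u - \<kappa>)^2" by (simp add: power2_eq_square algebra_simps)
  ultimately show ?thesis unfolding I1_def I2_def pN1 indicator_def by simp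
qed

lemma int_I2: "integrable lborel (I2 \<kappa>)"
  using lborel_integrable_real_affine_iff[of "-1" "I2 \<kappa>" 0] int_I1[of \<kappa>] unfolding I2_I1 by simp

lemma integral_I2: "(\<integral>u. I2 \<kappa> u \<partial>lborel) = (\<integral>u. I1 \<kappa> u \<partial>lborel)"
  using lborel_integral_real_affine[of "-1" "I2 \<kappa>" 0] unfolding I2_I1 by simp

lemma integral_I1: "(\<integral>u. I1 \<kappa> u \<partial>lborel) = Fk \<kappa> / 2"
  unfolding Fk_def I1_def by simp

lemma Fk_nonneg: "Fk \<kappa> \<ge> 0"
  unfolding Fk_def pN1 by (auto intro!: integral_nonneg_AE simp: indicator_def)

lemma Sj_phi: "\<kappa> > 0 \<Longrightarrow> Sj n \<kappa> j u * pN u 1 = of_bool (j < n) * I1 \<kappa> u + of_bool (1 < j) * I2 \<kappa> u"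
  unfolding Sj_def I1_def I2_def indicator_def by (auto simp: algebra_simps)

lemma int_Sj: "\<kappa> > 0 \<Longrightarrow> integrable lborel (\<lambda>u. Sj n \<kappa> j u * pN u 1)"
  by (subst Sj_phi) (auto intro!: Bochner_Integration.integrable_add integrable_mult_right int_I1 int_I2)

lemma integral_Sj: "\<kappa> > 0 \<Longrightarrow> (\<integral>u. Sj n \<kappa> j u * pN u 1 \<partial>lborel) = (of_bool (j < n) + of_bool (1 < j)) * (Fk \<kappa> / 2)"
proof -
  assume kp: "\<kappa> > 0"
  have "(\<integral>u. Sj n \<kappa> j u * pN u 1 \<partial>lborel) = (\<integral>u. of_bool (j < n) * I1 \<kappa> u + of_bool (1 < j) * I2 \<kappa> u \<partial>lborel)"
    using Sj_phi[OF kp] by simp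
  also have "\<dots> = (\<integral>u. of_bool (j < n) * I1 \<kappa> u \<partial>lborel) + (\<integral>u. of_bool (1 < j) * I2 \<kappa> u \<partial>lborel)"
    by (rule Bochner_Integration.integral_add[where f="\<lambda>u. of_bool (j<n) * I1 \<kappa> u" and g="\<lambda>u. of_bool (1<j) * I2 \<kappa> u"])
      (auto intro: int_I1 int_I2)
  also have "\<dots> = of_bool (j < n) * (\<integral>u. I1 \<kappa> u \<partial>lborel) + of_bool (1 < j) * (\<integral>u. I2 \<kappa> u \<partial>lborel)"
    by simp
  also have "\<dots> = (of_bool (j < n) + of_bool (1 < j)) * (Fk \<kappa> / 2)"
    unfolding integral_I2 integral_I1 by (simp add: algebra_simps)
  finally show ?thesis .
qed

lemma int_m3: "integrable lborel (\<lambda>u. \<bar>u\<bar>^3 * pN u 1)"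
  using integrable_std_normal_moment_abs[of 3] unfolding pN1 by (simp add: mult.commute)

definition m3 :: real where "m3 = (\<integral>u. \<bar>u\<bar>^3 * pN u 1 \<partial>lborel)"

lemma m3_nonneg: "m3 \<ge> 0"
  unfolding m3_def pN1 by (auto intro!: integral_nonneg_AE)

lemma sum_sides: "n \<ge> 2 \<Longrightarrow> (\<Sum>j=1..n. (of_bool (j < n) + of_bool (1 < j)) :: real) = 2 * (real n - 1)"
proof -
  assume n: "n \<ge> 2"
  have a: "{Suc 0..n} \<inter> {j. j < n} = {Suc 0..<n}" by auto
  have b: "{Suc 0..n} \<inter> {j. Suc 0 < j} = {2..n}" by auto
  show ?thesis using n by (simp add: sum.distrib a b of_nat_diff)
qed

context
  fixes n :: nat and D \<kappa> \<sigma> :: real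
  assumes n2: "n \<ge> 2" and Dp: "D > 0" and kp: "\<kappa> > 0" and sp: "\<sigma> > 0"
    and dle: "2 * (\<kappa> * \<sigma>) \<le> gridDelta n D"
begin

lemma rho_ge1: "gridDelta n D / (gridDelta n D - \<kappa>*\<sigma>) \<ge> 1"
proof -
  have "\<kappa>*\<sigma> > 0" using sp kp by simp
  then have "gridDelta n D - \<kappa>*\<sigma> > 0" "gridDelta n D - \<kappa>*\<sigma> \<le> gridDelta n D" using dle by auto
  then show ?thesis by (simp add: le_divide_eq)
qed

lemma Phi_upper:
  assumes j: "j \<in> {1..n}"
  shows "(Phi n D \<kappa> \<sigma> j u)^2 \<le> (gridDelta n D / (gridDelta n D - \<kappa>*\<sigma>))^2 * Sj n \<kappa> j u
           + (2 + 2*D/gridDelta n D)^2 * \<sigma> * \<bar>u\<bar>^3 / gridDelta n D"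
proof (cases "\<bar>u\<bar> \<le> gridDelta n D / \<sigma>")
  case True
  have "(Phi n D \<kappa> \<sigma> j u)^2 = (gridDelta n D / (gridDelta n D - \<kappa>*\<sigma>))^2 * Sj n \<kappa> j u"
    unfolding Phi_exact[OF n2 Dp kp sp dle j True] power_mult_distrib Tj_sq[OF kp] ..
  moreover have "(2 + 2*D/gridDelta n D)^2 * \<sigma> * \<bar>u\<bar>^3 / gridDelta n D \<ge> 0"
    using sp Dlt_pos[OF n2 Dp] by simp
  ultimately show ?thesis by linarith
next
  case False
  have "(Phi n D \<kappa> \<sigma> j u)^2 \<le> (2 + 2*D/gridDelta n D)^2 * \<sigma> * \<bar>u\<bar>^3 / gridDelta n D"
    using Phi_far[OF n2 Dp kp sp dle j] False by simp
  moreover have "(gridDelta n D / (gridDelta n D - \<kappa>*\<sigma>))^2 * Sj n \<kappa> j u \<ge> 0"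
    using Sj_nonneg by simp
  ultimately show ?thesis by linarith
qed

lemma Phi_lower:
  assumes j: "j \<in> {1..n}"
  shows "indicator {- (gridDelta n D / \<sigma>) ..< gridDelta n D / \<sigma>} u * (Phi n D \<kappa> \<sigma> j u)^2
          \<ge> Sj n \<kappa> j u - \<sigma> * \<bar>u\<bar>^3 / gridDelta n D"
proof -
  define \<Delta> where "\<Delta> = gridDelta n D"
  have Dpos: "\<Delta> > 0" unfolding \<Delta>_def using Dlt_pos[OF n2 Dp] .
  have c3: "\<sigma> * \<bar>u\<bar>^3 / \<Delta> \<ge> 0" using sp Dpos by simp
  show ?thesis
  proof (cases "- (\<Delta> / \<sigma>) \<le> u \<and> u < \<Delta> / \<sigma>")
    case True
    then have uM: "\<bar>u\<bar> \<le> gridDelta n D / \<sigma>" unfolding \<Delta>_def by auto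
    have "(Phi n D \<kappa> \<sigma> j u)^2 = (\<Delta> / (\<Delta> - \<kappa>*\<sigma>))^2 * Sj n \<kappa> j u"
      unfolding Phi_exact[OF n2 Dp kp sp dle j uM] power_mult_distrib Tj_sq[OF kp] \<Delta>_def ..
    moreover have "(\<Delta> / (\<Delta> - \<kappa>*\<sigma>))^2 \<ge> 1" using rho_ge1 unfolding \<Delta>_def
      by (metis one_le_power)
    ultimately have "(Phi n D \<kappa> \<sigma> j u)^2 \<ge> Sj n \<kappa> j u"
      using Sj_nonneg[of n \<kappa> j u] by (metis mult_le_cancel_right1 order.strict_iff_not)
    then show ?thesis using True c3 unfolding \<Delta>_def by (simp add: indicator_def)
  next
    case False
    then have uM: "\<bar>u\<bar> \<ge> \<Delta> / \<sigma>" by auto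
    have "\<kappa>*\<sigma> > 0" using sp kp by simp
    then have "\<kappa>*\<sigma> \<le> \<Delta>" using dle unfolding \<Delta>_def by linarith
    then have kM: "\<kappa> \<le> \<Delta> / \<sigma>" using sp by (simp add: field_simps)
    have "Sj n \<kappa> j u \<le> u^2"
    proof (cases "u \<ge> 0")
      case True
      then have "u \<ge> \<kappa>" using False kM by auto
      then have "(u - \<kappa>)^2 \<le> u^2" using kp by (intro power_mono) auto
      then show ?thesis using True kp unfolding Sj_def by auto
    next
      case F: False
      then have "u \<le> -\<kappa>" using False kM by auto
      then have "(u + \<kappa>)^2 \<le> u^2" using kp by (subst abs_le_square_iff[symmetric]) auto
      then show ?thesis using F kp unfolding Sj_def by auto
    qed
    also have "u^2 = u^2 * 1" by simp
    also have "\<dots> \<le> u^2 * (\<sigma> * \<bar>u\<bar> / \<Delta>)"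
      using uM sp Dpos by (intro mult_left_mono) (auto simp: field_simps)
    also have "\<dots> = \<sigma> * \<bar>u\<bar>^3 / \<Delta>" by (simp add: power2_eq_square power3_eq_cube)
    finally show ?thesis using False unfolding \<Delta>_def by (auto simp: indicator_def)
  qed
qed

lemma Phi_small:
  assumes j: "j \<in> {1..n}" and u: "\<bar>u\<bar> \<le> gridDelta n D / \<sigma>"
  shows "\<bar>Phi n D \<kappa> \<sigma> j u\<bar> \<le> gridDelta n D / \<sigma>"
proof -
  define \<Delta> where "\<Delta> = gridDelta n D"
  have Dd: "\<Delta> - \<kappa>*\<sigma> > 0" using dle sp kp unfolding \<Delta>_def by (smt (verit) mult_pos_pos)
  have "\<kappa>*\<sigma> > 0" using sp kp by simp
  then have "\<kappa>*\<sigma> \<le> \<Delta>" using dle unfolding \<Delta>_def by linarith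
  then have "\<bar>Tj n \<kappa> j u\<bar> \<le> \<Delta>/\<sigma> - \<kappa>"
    using u kp unfolding Tj_def \<Delta>_def[symmetric] using rho_ge1 dle sp
    by (auto simp: field_simps)
  then have "\<Delta> / (\<Delta> - \<kappa>*\<sigma>) * \<bar>Tj n \<kappa> j u\<bar> \<le> \<Delta> / (\<Delta> - \<kappa>*\<sigma>) * (\<Delta>/\<sigma> - \<kappa>)"
    using Dd Dlt_pos[OF n2 Dp] unfolding \<Delta>_def by (intro mult_left_mono) auto
  also have "\<dots> = \<Delta>/\<sigma>" using Dd sp by (simp add: field_simps)
  finally show ?thesis using Phi_exact[OF n2 Dp kp sp dle j u] Dd Dlt_pos[OF n2 Dp]
    unfolding \<Delta>_def by (simp add: abs_mult)
qed

end


lemma pN_pos: "s > 0 \<Longrightarrow> pN x s > 0"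
  unfolding pN_def by simp

lemma pN_meas[measurable]: "(\<lambda>x. pN (x - y) s) \<in> borel_measurable borel"
  unfolding pN_def by measurable

lemma pN_scale: "s > 0 \<Longrightarrow> pN (s * u) s = pN u 1 / s"
  unfolding pN_def by (simp add: power_mult_distrib)

lemma subst_gauss:
  assumes sp: "s > 0" and int: "integrable lborel (\<lambda>u. H (y + s*u) * pN u 1)"
  shows "integrable lborel (\<lambda>x. H x * pN (x - y) s) \<and>
         (\<integral>x. H x * pN (x - y) s \<partial>lborel) = (\<integral>u. H (y + s*u) * pN u 1 \<partial>lborel)"
proof -
  define G where "G x = H x * pN (x - y) s" for x
  have eq: "G (y + s*u) = (1/s) * (H (y + s*u) * pN u 1)" for u
    unfolding G_def using pN_scale[OF sp, of u] by simp
  have "integrable lborel (\<lambda>u. G (y + s*u))" unfolding eq using int by simp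
  then have iG: "integrable lborel G" using lborel_integrable_real_affine_iff[of s G y] sp by simp
  have "(\<integral>x. G x \<partial>lborel) = \<bar>s\<bar> *\<^sub>R (\<integral>u. G (y + s*u) \<partial>lborel)"
    by (rule lborel_integral_real_affine) (use sp in simp)
  also have "\<dots> = (\<integral>u. H (y + s*u) * pN u 1 \<partial>lborel)" unfolding eq using sp by simp
  finally show ?thesis using iG unfolding G_def by simp
qed

lemma pN_deriv:
  assumes sp: "s > 0"
  shows "((\<lambda>u. pN (u - y) s) has_real_derivative pN (x - y) s * ((y - x) / s^2)) (at x)"
proof -
  have q: "((\<lambda>u. - ((u - y)^2) / (2 * s^2)) has_real_derivative (- (x - y) / s^2)) (at x)"
    using sp by (auto intro!: derivative_eq_intros simp: field_simps power2_eq_square)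
  have e: "((\<lambda>u. exp (- ((u - y)^2) / (2 * s^2))) has_real_derivative
        exp (- ((x - y)^2) / (2 * s^2)) * (- (x - y) / s^2)) (at x)"
    by (rule DERIV_chain2[OF DERIV_exp q])
  have A: "((\<lambda>u. exp (- ((u - y)^2) / (2 * s^2)) / (sqrt (2 * pi) * s)) has_real_derivative
        exp (- ((x - y)^2) / (2 * s^2)) * (- (x - y) / s^2) / (sqrt (2 * pi) * s)) (at x)"
    by (rule DERIV_cdivide[OF e])
  have B: "exp (- ((x - y)^2) / (2 * s^2)) * (- (x - y) / s^2) / (sqrt (2 * pi) * s)
     = pN (x - y) s * ((y - x) / s^2)"
    unfolding pN_def by (simp add: algebra_simps)
  have f: "(\<lambda>u. pN (u - y) s) = (\<lambda>u. exp (- ((u - y)^2) / (2 * s^2)) / (sqrt (2 * pi) * s))"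
    unfolding pN_def ..
  show ?thesis unfolding f using A B by (simp only:)
qed

lemma cs_weighted:
  fixes g a :: "nat \<Rightarrow> real"
  assumes "\<And>k. k \<in> K \<Longrightarrow> g k \<ge> 0"
  shows "(\<Sum>k\<in>K. g k * a k)^2 \<le> (\<Sum>k\<in>K. g k) * (\<Sum>k\<in>K. g k * (a k)^2)"
proof -
  have "(\<Sum>k\<in>K. sqrt (g k) * (sqrt (g k) * a k))^2 \<le> (\<Sum>k\<in>K. (sqrt (g k))^2) * (\<Sum>k\<in>K. (sqrt (g k) * a k)^2)"
    by (rule Cauchy_Schwarz_ineq_sum)
  moreover have "(\<Sum>k\<in>K. sqrt (g k) * (sqrt (g k) * a k)) = (\<Sum>k\<in>K. g k * a k)"
    using assms by (intro sum.cong) (auto simp: mult.assoc[symmetric])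
  moreover have "(\<Sum>k\<in>K. (sqrt (g k))^2) = (\<Sum>k\<in>K. g k)"
    using assms by (intro sum.cong) auto
  moreover have "(\<Sum>k\<in>K. (sqrt (g k) * a k)^2) = (\<Sum>k\<in>K. g k * (a k)^2)"
    using assms by (intro sum.cong) (auto simp: power_mult_distrib)
  ultimately show ?thesis by simp
qed



definition gk :: "nat \<Rightarrow> real \<Rightarrow> real \<Rightarrow> nat \<Rightarrow> real \<Rightarrow> real" where
  "gk n D s k x = pN (x - ypt n D k) s"
definition Gs :: "nat \<Rightarrow> real \<Rightarrow> real \<Rightarrow> real \<Rightarrow> real" where
  "Gs n D s x = (\<Sum>k=1..n. gk n D s k x)"
definition sc :: "nat \<Rightarrow> real \<Rightarrow> real \<Rightarrow> real \<Rightarrow> real" where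
  "sc n D s x = (\<Sum>k=1..n. gk n D s k x * ((ypt n D k - x) / s^2)) / Gs n D s x"
definition Tf :: "nat \<Rightarrow> real \<Rightarrow> real \<Rightarrow> real \<Rightarrow> real" where
  "Tf n D s x = (\<Sum>i=1..n. (if gridDelta n D \<le> \<bar>x - ypt n D i\<bar> then gk n D s i x else 0))"

lemma shat_meas_borel[measurable]:
  assumes "n \<ge> 2" "D > 0" "t > 0" "\<delta> > 0" "2 * \<delta> \<le> gridDelta n D"
  shows "shat n D t \<delta> \<in> borel_measurable borel"
  using shat_measurable[OF assms] by simp

context
  fixes n :: nat and D \<kappa> \<sigma> :: real
  assumes n2: "n \<ge> 2" and Dp: "D > 0" and kp: "\<kappa> > 0" and sp: "\<sigma> > 0"
    and dle: "2 * (\<kappa> * \<sigma>) \<le> gridDelta n D"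
begin

lemma gk_pos: "gk n D \<sigma> k x > 0" unfolding gk_def using pN_pos[OF sp] .

lemma Gs_pos: "Gs n D \<sigma> x > 0"
  unfolding Gs_def using n2 gk_pos by (intro sum_pos) auto

lemma pt_eq: "pt n D (\<sigma>^2) x = Gs n D \<sigma> x / real n"
  unfolding pt_def Gs_def gk_def using sp by simp

lemma deriv_eq: "deriv (\<lambda>u. ln (pt n D (\<sigma>^2) u)) x = sc n D \<sigma> x"
proof -
  have d: "((\<lambda>u. Gs n D \<sigma> u) has_real_derivative (\<Sum>k=1..n. gk n D \<sigma> k x * ((ypt n D k - x) / \<sigma>^2))) (at x)"
    unfolding Gs_def gk_def by (rule DERIV_sum) (rule pN_deriv[OF sp])
  have d2: "((\<lambda>u. ln (Gs n D \<sigma> u / real n)) has_real_derivative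
     inverse (Gs n D \<sigma> x / real n) * ((\<Sum>k=1..n. gk n D \<sigma> k x * ((ypt n D k - x) / \<sigma>^2)) / real n)) (at x)"
    by (rule DERIV_chain2[OF DERIV_ln DERIV_cdivide[OF d]]) (use Gs_pos n2 in simp)
  have "inverse (Gs n D \<sigma> x / real n) * ((\<Sum>k=1..n. gk n D \<sigma> k x * ((ypt n D k - x) / \<sigma>^2)) / real n)
        = sc n D \<sigma> x"
    unfolding sc_def using n2 Gs_pos[of x] by (simp add: field_simps)
  then have "((\<lambda>u. ln (pt n D (\<sigma>^2) u)) has_real_derivative sc n D \<sigma> x) (at x)"
    using d2 unfolding pt_eq by simp
  then show ?thesis by (rule DERIV_imp_deriv)
qed

lemma upper_pw:
  "(f - sc n D \<sigma> x)^2 * pt n D (\<sigma>^2) x \<le>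
     (1 / real n) * (\<Sum>k=1..n. (f - (ypt n D k - x) / \<sigma>^2)^2 * gk n D \<sigma> k x)"
proof -
  define G where "G = Gs n D \<sigma> x"
  have Gp: "G > 0" unfolding G_def by (rule Gs_pos)
  have e: "(\<Sum>k=1..n. gk n D \<sigma> k x * (f - (ypt n D k - x) / \<sigma>^2)) = G * (f - sc n D \<sigma> x)"
  proof -
    have "(\<Sum>k=1..n. gk n D \<sigma> k x * (f - (ypt n D k - x) / \<sigma>^2))
       = f * G - (\<Sum>k=1..n. gk n D \<sigma> k x * ((ypt n D k - x) / \<sigma>^2))"
      unfolding G_def Gs_def by (simp add: algebra_simps sum_subtractf sum_distrib_left)
    also have "\<dots> = G * (f - sc n D \<sigma> x)"
      unfolding sc_def G_def[symmetric] using Gp by (simp add: field_simps)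
    finally show ?thesis .
  qed
  have cs: "(G * (f - sc n D \<sigma> x))^2 \<le> G * (\<Sum>k=1..n. gk n D \<sigma> k x * (f - (ypt n D k - x) / \<sigma>^2)^2)"
    using cs_weighted[of "{1..n}" "\<lambda>k. gk n D \<sigma> k x" "\<lambda>k. f - (ypt n D k - x) / \<sigma>^2"] gk_pos
    unfolding e G_def Gs_def by (simp add: less_imp_le)
  then have "G * (G * (f - sc n D \<sigma> x)^2) \<le> G * (\<Sum>k=1..n. gk n D \<sigma> k x * (f - (ypt n D k - x) / \<sigma>^2)^2)"
    by (simp add: power_mult_distrib power2_eq_square mult_ac)
  then have "G * (f - sc n D \<sigma> x)^2 \<le> (\<Sum>k=1..n. gk n D \<sigma> k x * (f - (ypt n D k - x) / \<sigma>^2)^2)"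
    using Gp by simp
  then show ?thesis unfolding pt_eq G_def[symmetric] using n2
    by (simp add: divide_right_mono mult.commute divide_simps)
qed

lemma lower_pw:
  assumes j: "j \<in> {1..n}" and xA: "ypt n D j - gridDelta n D \<le> x" "x < ypt n D j + gridDelta n D"
    and fb: "\<bar>f - (ypt n D j - x) / \<sigma>^2\<bar> \<le> gridDelta n D / \<sigma>^2"
  shows "(f - sc n D \<sigma> x)^2 * pt n D (\<sigma>^2) x \<ge>
     (f - (ypt n D j - x) / \<sigma>^2)^2 * gk n D \<sigma> j x / real n - 4 * D * gridDelta n D / \<sigma>^4 * Tf n D \<sigma> x"
proof -
  define G where "G = Gs n D \<sigma> x"
  define \<Delta> where "\<Delta> = gridDelta n D"
  have Dpos: "\<Delta> > 0" unfolding \<Delta>_def using Dlt_pos[OF n2 Dp] .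
  have Gp: "G > 0" unfolding G_def by (rule Gs_pos)
  define r where "r k = (ypt n D k - x) / \<sigma>^2" for k
  define a where "a = f - r j"
  define e where "e = sc n D \<sigma> x - r j"
  have Tnn: "Tf n D \<sigma> x \<ge> 0" unfolding Tf_def using gk_pos by (intro sum_nonneg) (auto simp: less_imp_le)
  have eG: "e * G = (\<Sum>i=1..n. gk n D \<sigma> i x * (r i - r j))"
  proof -
    have "(\<Sum>i=1..n. gk n D \<sigma> i x * (r i - r j)) = (\<Sum>i=1..n. gk n D \<sigma> i x * r i) - r j * G"
      unfolding G_def Gs_def by (simp add: algebra_simps sum_subtractf sum_distrib_left)
    also have "\<dots> = e * G" unfolding e_def sc_def r_def G_def[symmetric] using Gp by (simp add: field_simps)
    finally show ?thesis by simp
  qed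
  have termb: "\<bar>gk n D \<sigma> i x * (r i - r j)\<bar> \<le> 2 * D / \<sigma>^2 * (if \<Delta> \<le> \<bar>x - ypt n D i\<bar> then gk n D \<sigma> i x else 0)"
    if i: "i \<in> {1..n}" for i
  proof (cases "i = j")
    case True then show ?thesis using gk_pos[of i x] Dp by simp
  next
    case False
    then have "i < j \<or> j < i" by auto
    then have far: "\<Delta> \<le> \<bar>x - ypt n D i\<bar>"
      using y_sep[OF n2 Dp, of i j] y_sep[OF n2 Dp, of j i] xA unfolding \<Delta>_def by auto
    have "\<bar>r i - r j\<bar> = \<bar>ypt n D i - ypt n D j\<bar> / \<sigma>^2" unfolding r_def by (simp add: diff_divide_distrib[symmetric])
    also have "\<dots> \<le> 2 * D / \<sigma>^2" using y_bound[OF n2 Dp i] y_bound[OF n2 Dp j] sp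
      by (intro divide_right_mono) auto
    finally have "\<bar>r i - r j\<bar> \<le> 2 * D / \<sigma>^2" .
    then have "gk n D \<sigma> i x * \<bar>r i - r j\<bar> \<le> gk n D \<sigma> i x * (2 * D / \<sigma>^2)"
      using gk_pos[of i x] by (intro mult_left_mono) auto
    then show ?thesis using far gk_pos[of i x] by (simp add: abs_mult mult.commute)
  qed
  have eGb: "\<bar>e\<bar> * G \<le> 2 * D / \<sigma>^2 * Tf n D \<sigma> x"
  proof -
    have "\<bar>e\<bar> * G = \<bar>e * G\<bar>" using Gp by (simp add: abs_mult)
    also have "\<dots> \<le> (\<Sum>i=1..n. \<bar>gk n D \<sigma> i x * (r i - r j)\<bar>)" unfolding eG by (rule sum_abs)
    also have "\<dots> \<le> (\<Sum>i=1..n. 2 * D / \<sigma>^2 * (if \<Delta> \<le> \<bar>x - ypt n D i\<bar> then gk n D \<sigma> i x else 0))"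
      by (rule sum_mono) (rule termb)
    also have "\<dots> = 2 * D / \<sigma>^2 * Tf n D \<sigma> x" unfolding Tf_def \<Delta>_def by (simp add: sum_distrib_left)
    finally show ?thesis .
  qed
  have sq: "(f - sc n D \<sigma> x)^2 \<ge> a^2 - 2 * \<bar>a\<bar> * \<bar>e\<bar>"
  proof -
    have "f - sc n D \<sigma> x = a - e" unfolding a_def e_def by simp
    moreover have "(a - e)^2 \<ge> a^2 - 2 * \<bar>a\<bar> * \<bar>e\<bar>"
    proof -
      have "a * e \<le> \<bar>a\<bar> * \<bar>e\<bar>" by (metis abs_ge_self abs_mult)
      moreover have "e^2 \<ge> 0" by simp
      moreover have "(a - e)^2 = a^2 - 2*(a*e) + e^2" by (simp add: power2_eq_square algebra_simps)
      ultimately show ?thesis by linarith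
    qed
    ultimately show ?thesis by simp
  qed
  have gj: "gk n D \<sigma> j x \<le> G" unfolding G_def Gs_def
    using j gk_pos by (intro member_le_sum) (auto simp: less_imp_le)
  have ab: "\<bar>a\<bar> \<le> \<Delta> / \<sigma>^2" using fb unfolding a_def r_def \<Delta>_def .
  have "(f - sc n D \<sigma> x)^2 * G \<ge> (a^2 - 2 * \<bar>a\<bar> * \<bar>e\<bar>) * G"
    using sq Gp by (intro mult_right_mono) auto
  also have "(a^2 - 2 * \<bar>a\<bar> * \<bar>e\<bar>) * G = a^2 * G - 2 * \<bar>a\<bar> * (\<bar>e\<bar> * G)" by (simp add: algebra_simps)
  also have "\<dots> \<ge> a^2 * gk n D \<sigma> j x - 2 * (\<Delta> / \<sigma>^2) * (2 * D / \<sigma>^2 * Tf n D \<sigma> x)"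
  proof -
    have "a^2 * gk n D \<sigma> j x \<le> a^2 * G" using gj by (intro mult_left_mono) auto
    moreover have "\<bar>a\<bar> * (\<bar>e\<bar> * G) \<le> (\<Delta> / \<sigma>^2) * (2 * D / \<sigma>^2 * Tf n D \<sigma> x)"
      by (rule mult_mono[OF ab eGb]) (use Dpos Gp in auto)
    ultimately show ?thesis by linarith
  qed
  finally have main: "(f - sc n D \<sigma> x)^2 * G \<ge> a^2 * gk n D \<sigma> j x - 4 * D * \<Delta> / \<sigma>^4 * Tf n D \<sigma> x"
    by (simp add: power_def algebra_simps)
  have nn: "real n \<ge> 1" using n2 by simp
  have c0: "4 * D * \<Delta> / \<sigma>^4 * Tf n D \<sigma> x \<ge> 0" using Dp Dpos Tnn sp by simp
  have "(f - sc n D \<sigma> x)^2 * pt n D (\<sigma>^2) x = (f - sc n D \<sigma> x)^2 * G / real n"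
    unfolding pt_eq G_def by simp
  also have "\<dots> \<ge> (a^2 * gk n D \<sigma> j x - 4 * D * \<Delta> / \<sigma>^4 * Tf n D \<sigma> x) / real n"
    using main nn by (intro divide_right_mono) auto
  also have "(a^2 * gk n D \<sigma> j x - 4 * D * \<Delta> / \<sigma>^4 * Tf n D \<sigma> x) / real n
      = a^2 * gk n D \<sigma> j x / real n - (4 * D * \<Delta> / \<sigma>^4 * Tf n D \<sigma> x) / real n" by (simp add: diff_divide_distrib)
  also have "\<dots> \<ge> a^2 * gk n D \<sigma> j x / real n - 4 * D * \<Delta> / \<sigma>^4 * Tf n D \<sigma> x"
  proof -
    have gen: "c / real n \<le> c" if "c \<ge> 0" for c :: real
    proof -
      have "c * 1 \<le> c * real n" using mult_left_mono[OF nn that] .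
      then show ?thesis using nn by (simp add: divide_le_eq)
    qed
    show ?thesis using gen[OF c0] by linarith
  qed
  finally show ?thesis unfolding a_def r_def \<Delta>_def .
qed

end


lemma pN_meas0[measurable]: "(\<lambda>x. pN x s) \<in> borel_measurable borel"
  unfolding pN_def by measurable

context
  fixes n :: nat and D \<kappa> \<sigma> :: real
  assumes n2: "n \<ge> 2" and Dp: "D > 0" and kp: "\<kappa> > 0" and sp: "\<sigma> > 0"
    and dle: "2 * (\<kappa> * \<sigma>) \<le> gridDelta n D"
begin

lemma tp'': "\<sigma>^2 > 0" using sp by simp
lemma dp'': "\<kappa> * \<sigma> > 0" using sp kp by simp

lemma f_meas[measurable]: "shat n D (\<sigma>^2) (\<kappa>*\<sigma>) \<in> borel_measurable borel"
  by (rule shat_meas_borel[OF n2 Dp tp'' dp'' dle])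

lemma Phi_meas[measurable]: "Phi n D \<kappa> \<sigma> j \<in> borel_measurable borel"
  unfolding Phi_def by measurable

lemma H_eq: "shat n D (\<sigma>^2) (\<kappa>*\<sigma>) (y + \<sigma>*u) - (y - (y + \<sigma>*u)) / \<sigma>^2
   = Phi n D \<kappa> \<sigma> j u / \<sigma>" if "y = ypt n D j"
  unfolding Phi_def that using sp by (simp add: field_simps power2_eq_square)

lemma H_eq_x: "shat n D (\<sigma>^2) (\<kappa>*\<sigma>) x - (ypt n D j - x) / \<sigma>^2
   = Phi n D \<kappa> \<sigma> j ((x - ypt n D j) / \<sigma>) / \<sigma>"
  using H_eq[of "ypt n D j" j "(x - ypt n D j) / \<sigma>"] sp by simp

definition K1 :: real where "K1 = (2 + 2*D/gridDelta n D)^2"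
definition rho :: real where "rho = gridDelta n D / (gridDelta n D - \<kappa>*\<sigma>)"

lemma int_Phi:
  assumes j: "j \<in> {1..n}"
  shows "integrable lborel (\<lambda>u. (Phi n D \<kappa> \<sigma> j u)^2 * pN u 1)"
proof (rule Bochner_Integration.integrable_bound)
  show "integrable lborel (\<lambda>u. rho^2 * (Sj n \<kappa> j u * pN u 1) + K1 * \<sigma> / gridDelta n D * (\<bar>u\<bar>^3 * pN u 1))"
    by (intro Bochner_Integration.integrable_add integrable_mult_right int_Sj[OF kp] int_m3)
  show "(\<lambda>u. (Phi n D \<kappa> \<sigma> j u)^2 * pN u 1) \<in> borel_measurable lborel"
    by measurable
  show "AE u in lborel. norm ((Phi n D \<kappa> \<sigma> j u)^2 * pN u 1) \<le>
        norm (rho^2 * (Sj n \<kappa> j u * pN u 1) + K1 * \<sigma> / gridDelta n D * (\<bar>u\<bar>^3 * pN u 1))"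
  proof (rule AE_I2)
    fix u
    have p: "pN u 1 > 0" by (rule pN_pos) simp
    have "(Phi n D \<kappa> \<sigma> j u)^2 * pN u 1 \<le> (rho^2 * Sj n \<kappa> j u + K1 * \<sigma> * \<bar>u\<bar>^3 / gridDelta n D) * pN u 1"
      using Phi_upper[OF n2 Dp kp sp dle j, of u] p unfolding rho_def K1_def by (intro mult_right_mono) auto
    moreover have "0 \<le> rho^2 * Sj n \<kappa> j u + K1 * \<sigma> * \<bar>u\<bar>^3 / gridDelta n D"
      using Sj_nonneg[of n \<kappa> j u] sp Dlt_pos[OF n2 Dp] unfolding K1_def by simp
    ultimately show "norm ((Phi n D \<kappa> \<sigma> j u)^2 * pN u 1) \<le>
        norm (rho^2 * (Sj n \<kappa> j u * pN u 1) + K1 * \<sigma> / gridDelta n D * (\<bar>u\<bar>^3 * pN u 1))"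
      using p by (simp add: algebra_simps)
  qed
qed

lemma integral_Phi_upper:
  assumes j: "j \<in> {1..n}"
  shows "(\<integral>u. (Phi n D \<kappa> \<sigma> j u)^2 * pN u 1 \<partial>lborel)
     \<le> rho^2 * ((of_bool (j < n) + of_bool (1 < j)) * (Fk \<kappa> / 2)) + K1 * \<sigma> / gridDelta n D * m3"
proof -
  have p: "pN u 1 > 0" for u by (rule pN_pos) simp
  have "(\<integral>u. (Phi n D \<kappa> \<sigma> j u)^2 * pN u 1 \<partial>lborel) \<le>
     (\<integral>u. rho^2 * (Sj n \<kappa> j u * pN u 1) + K1 * \<sigma> / gridDelta n D * (\<bar>u\<bar>^3 * pN u 1) \<partial>lborel)"
  proof (rule integral_mono[OF int_Phi[OF j]])
    show "integrable lborel (\<lambda>u. rho^2 * (Sj n \<kappa> j u * pN u 1) + K1 * \<sigma> / gridDelta n D * (\<bar>u\<bar>^3 * pN u 1))"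
      by (intro Bochner_Integration.integrable_add integrable_mult_right int_Sj[OF kp] int_m3)
    fix u
    have "(Phi n D \<kappa> \<sigma> j u)^2 * pN u 1 \<le> (rho^2 * Sj n \<kappa> j u + K1 * \<sigma> * \<bar>u\<bar>^3 / gridDelta n D) * pN u 1"
      using Phi_upper[OF n2 Dp kp sp dle j, of u] p[of u] unfolding rho_def K1_def by (intro mult_right_mono) auto
    then show "(Phi n D \<kappa> \<sigma> j u)^2 * pN u 1 \<le> rho^2 * (Sj n \<kappa> j u * pN u 1) + K1 * \<sigma> / gridDelta n D * (\<bar>u\<bar>^3 * pN u 1)"
      by (simp add: algebra_simps)
  qed
  also have "\<dots> = rho^2 * (\<integral>u. Sj n \<kappa> j u * pN u 1 \<partial>lborel) + K1 * \<sigma> / gridDelta n D * m3"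
    unfolding m3_def
    by (subst Bochner_Integration.integral_add) (auto intro!: integrable_mult_right int_Sj[OF kp] int_m3)
  finally show ?thesis unfolding integral_Sj[OF kp] .
qed

lemma U_int:
  assumes j: "j \<in> {1..n}"
  shows "integrable lborel (\<lambda>x. (shat n D (\<sigma>^2) (\<kappa>*\<sigma>) x - (ypt n D j - x) / \<sigma>^2)^2 * gk n D \<sigma> j x)
    \<and> (\<integral>x. (shat n D (\<sigma>^2) (\<kappa>*\<sigma>) x - (ypt n D j - x) / \<sigma>^2)^2 * gk n D \<sigma> j x \<partial>lborel)
       = (\<integral>u. (Phi n D \<kappa> \<sigma> j u)^2 * pN u 1 \<partial>lborel) / \<sigma>^2"
proof -
  define H where "H x = (shat n D (\<sigma>^2) (\<kappa>*\<sigma>) x - (ypt n D j - x) / \<sigma>^2)^2" for x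
  have eq: "H (ypt n D j + \<sigma>*u) * pN u 1 = (1/\<sigma>^2) * ((Phi n D \<kappa> \<sigma> j u)^2 * pN u 1)" for u
    unfolding H_def H_eq[OF refl] using sp by (simp add: power_divide)
  have "integrable lborel (\<lambda>u. H (ypt n D j + \<sigma>*u) * pN u 1)"
    unfolding eq by (intro integrable_mult_right int_Phi[OF j])
  from subst_gauss[OF sp this] show ?thesis unfolding H_def[symmetric] gk_def eq by simp
qed

lemma ind_eq: "indicator {y - gridDelta n D ..< y + gridDelta n D} (y + \<sigma>*u) =
   (indicator {- (gridDelta n D / \<sigma>) ..< gridDelta n D / \<sigma>} u :: real)"
proof -
  have "(y - gridDelta n D \<le> y + \<sigma>*u) = (- (gridDelta n D / \<sigma>) \<le> u)" using sp by (auto simp: field_simps)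
  moreover have "(y + \<sigma>*u < y + gridDelta n D) = (u < gridDelta n D / \<sigma>)" using sp by (simp add: field_simps)
  ultimately show ?thesis unfolding indicator_def by simp
qed

lemma LA_int:
  assumes j: "j \<in> {1..n}"
  shows "integrable lborel (\<lambda>x. indicator {ypt n D j - gridDelta n D ..< ypt n D j + gridDelta n D} x *
            (shat n D (\<sigma>^2) (\<kappa>*\<sigma>) x - (ypt n D j - x) / \<sigma>^2)^2 * gk n D \<sigma> j x)
    \<and> (\<integral>x. indicator {ypt n D j - gridDelta n D ..< ypt n D j + gridDelta n D} x *
            (shat n D (\<sigma>^2) (\<kappa>*\<sigma>) x - (ypt n D j - x) / \<sigma>^2)^2 * gk n D \<sigma> j x \<partial>lborel)
       \<ge> ((of_bool (j < n) + of_bool (1 < j)) * (Fk \<kappa> / 2) - \<sigma> / gridDelta n D * m3) / \<sigma>^2"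
proof -
  define A where "A = {ypt n D j - gridDelta n D ..< ypt n D j + gridDelta n D}"
  define I where "I = {- (gridDelta n D / \<sigma>) ..< gridDelta n D / \<sigma>}"
  define H where "H x = indicator A x * (shat n D (\<sigma>^2) (\<kappa>*\<sigma>) x - (ypt n D j - x) / \<sigma>^2)^2" for x
  have eq: "H (ypt n D j + \<sigma>*u) * pN u 1 = (1/\<sigma>^2) * (indicator I u * (Phi n D \<kappa> \<sigma> j u)^2 * pN u 1)" for u
    unfolding H_def H_eq[OF refl] A_def ind_eq I_def using sp by (simp add: power_divide)
  have p: "pN u 1 > 0" for u by (rule pN_pos) simp
  have iI: "integrable lborel (\<lambda>u. indicator I u * (Phi n D \<kappa> \<sigma> j u)^2 * pN u 1)"
  proof (rule Bochner_Integration.integrable_bound[OF int_Phi[OF j]])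
    show "(\<lambda>u. indicator I u * (Phi n D \<kappa> \<sigma> j u)^2 * pN u 1) \<in> borel_measurable lborel"
      unfolding I_def by measurable
    show "AE u in lborel. norm (indicator I u * (Phi n D \<kappa> \<sigma> j u)^2 * pN u 1) \<le> norm ((Phi n D \<kappa> \<sigma> j u)^2 * pN u 1)"
      using p by (intro AE_I2) (auto simp: indicator_def abs_mult)
  qed
  have "integrable lborel (\<lambda>u. H (ypt n D j + \<sigma>*u) * pN u 1)"
    unfolding eq by (intro integrable_mult_right iI)
  from subst_gauss[OF sp this] have s: "integrable lborel (\<lambda>x. H x * pN (x - ypt n D j) \<sigma>)"
    "(\<integral>x. H x * pN (x - ypt n D j) \<sigma> \<partial>lborel) = (\<integral>u. H (ypt n D j + \<sigma>*u) * pN u 1 \<partial>lborel)" by auto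
  have low: "(\<integral>u. indicator I u * (Phi n D \<kappa> \<sigma> j u)^2 * pN u 1 \<partial>lborel) \<ge>
      (\<integral>u. Sj n \<kappa> j u * pN u 1 - \<sigma> / gridDelta n D * (\<bar>u\<bar>^3 * pN u 1) \<partial>lborel)"
  proof (rule integral_mono[OF _ iI])
    show "integrable lborel (\<lambda>u. Sj n \<kappa> j u * pN u 1 - \<sigma> / gridDelta n D * (\<bar>u\<bar>^3 * pN u 1))"
      by (intro Bochner_Integration.integrable_diff integrable_mult_right int_Sj[OF kp] int_m3)
    fix u
    have "Sj n \<kappa> j u - \<sigma> * \<bar>u\<bar>^3 / gridDelta n D \<le> indicator I u * (Phi n D \<kappa> \<sigma> j u)^2"
      using Phi_lower[OF n2 Dp kp sp dle j, of u] unfolding I_def .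
    then have "(Sj n \<kappa> j u - \<sigma> * \<bar>u\<bar>^3 / gridDelta n D) * pN u 1 \<le> indicator I u * (Phi n D \<kappa> \<sigma> j u)^2 * pN u 1"
      using p[of u] by (intro mult_right_mono) auto
    then show "Sj n \<kappa> j u * pN u 1 - \<sigma> / gridDelta n D * (\<bar>u\<bar>^3 * pN u 1) \<le> indicator I u * (Phi n D \<kappa> \<sigma> j u)^2 * pN u 1"
      by (simp add: algebra_simps)
  qed
  have "(\<integral>u. Sj n \<kappa> j u * pN u 1 - \<sigma> / gridDelta n D * (\<bar>u\<bar>^3 * pN u 1) \<partial>lborel)
      = (of_bool (j < n) + of_bool (1 < j)) * (Fk \<kappa> / 2) - \<sigma> / gridDelta n D * m3"
    unfolding m3_def integral_Sj[OF kp, symmetric]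
    by (subst Bochner_Integration.integral_diff) (auto intro!: integrable_mult_right int_Sj[OF kp] int_m3)
  then have "(\<integral>u. H (ypt n D j + \<sigma>*u) * pN u 1 \<partial>lborel) \<ge>
      ((of_bool (j < n) + of_bool (1 < j)) * (Fk \<kappa> / 2) - \<sigma> / gridDelta n D * m3) / \<sigma>^2"
    unfolding eq using low sp by (simp add: divide_right_mono)
  moreover have "(\<lambda>x. H x * pN (x - ypt n D j) \<sigma>) = (\<lambda>x. indicator A x *
            (shat n D (\<sigma>^2) (\<kappa>*\<sigma>) x - (ypt n D j - x) / \<sigma>^2)^2 * gk n D \<sigma> j x)"
    unfolding H_def gk_def by simp
  ultimately show ?thesis using s unfolding A_def by simp
qed

lemma T_int:
  assumes i: "i \<in> {1..n}"
  shows "integrable lborel (\<lambda>x. if gridDelta n D \<le> \<bar>x - ypt n D i\<bar> then gk n D \<sigma> i x else 0)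
    \<and> (\<integral>x. (if gridDelta n D \<le> \<bar>x - ypt n D i\<bar> then gk n D \<sigma> i x else 0) \<partial>lborel)
       \<le> \<sigma>^3 / (gridDelta n D)^3 * m3"
proof -
  define \<Delta> where "\<Delta> = gridDelta n D"
  have Dpos: "\<Delta> > 0" unfolding \<Delta>_def using Dlt_pos[OF n2 Dp] .
  define H where "H x = (if \<Delta> \<le> \<bar>x - ypt n D i\<bar> then 1 else 0 :: real)" for x
  have eq: "H (ypt n D i + \<sigma>*u) * pN u 1 = (if \<Delta> \<le> \<sigma> * \<bar>u\<bar> then pN u 1 else 0)" for u
    unfolding H_def using sp by (simp add: abs_mult)
  have p: "pN u 1 > 0" for u by (rule pN_pos) simp
  have bnd: "(if \<Delta> \<le> \<sigma> * \<bar>u\<bar> then pN u 1 else 0) \<le> \<sigma>^3 / \<Delta>^3 * (\<bar>u\<bar>^3 * pN u 1)" for u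
  proof (cases "\<Delta> \<le> \<sigma> * \<bar>u\<bar>")
    case True
    then have "\<Delta>^3 \<le> (\<sigma> * \<bar>u\<bar>)^3" using Dpos by (intro power_mono) auto
    then have "1 \<le> \<sigma>^3 / \<Delta>^3 * \<bar>u\<bar>^3" using Dpos by (simp add: field_simps power_mult_distrib)
    then have "1 * pN u 1 \<le> \<sigma>^3 / \<Delta>^3 * \<bar>u\<bar>^3 * pN u 1" using p[of u] by (intro mult_right_mono) auto
    then show ?thesis using True by simp
  next
    case False then show ?thesis using p[of u] sp Dpos by simp
  qed
  have iu: "integrable lborel (\<lambda>u. if \<Delta> \<le> \<sigma> * \<bar>u\<bar> then pN u 1 else 0)"
  proof (rule Bochner_Integration.integrable_bound)
    show "integrable lborel (\<lambda>u. pN u 1)" unfolding pN1 by simp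
    show "(\<lambda>u. if \<Delta> \<le> \<sigma> * \<bar>u\<bar> then pN u 1 else 0) \<in> borel_measurable lborel" by measurable
    show "AE u in lborel. norm (if \<Delta> \<le> \<sigma> * \<bar>u\<bar> then pN u 1 else 0) \<le> norm (pN u 1)"
      using p by (intro AE_I2) auto
  qed
  have "integrable lborel (\<lambda>u. H (ypt n D i + \<sigma>*u) * pN u 1)" unfolding eq by (rule iu)
  from subst_gauss[OF sp this] have s: "integrable lborel (\<lambda>x. H x * pN (x - ypt n D i) \<sigma>)"
    "(\<integral>x. H x * pN (x - ypt n D i) \<sigma> \<partial>lborel) = (\<integral>u. H (ypt n D i + \<sigma>*u) * pN u 1 \<partial>lborel)" by auto
  have "(\<integral>u. H (ypt n D i + \<sigma>*u) * pN u 1 \<partial>lborel) \<le> (\<integral>u. \<sigma>^3 / \<Delta>^3 * (\<bar>u\<bar>^3 * pN u 1) \<partial>lborel)"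
    unfolding eq
  proof (rule integral_mono[OF iu])
    show "integrable lborel (\<lambda>u. \<sigma>^3 / \<Delta>^3 * (\<bar>u\<bar>^3 * pN u 1))" by (intro integrable_mult_right int_m3)
    fix u show "(if \<Delta> \<le> \<sigma> * \<bar>u\<bar> then pN u 1 else 0) \<le> \<sigma>^3 / \<Delta>^3 * (\<bar>u\<bar>^3 * pN u 1)" by (rule bnd)
  qed
  also have "\<dots> = \<sigma>^3 / \<Delta>^3 * m3" unfolding m3_def by simp
  finally have le: "(\<integral>u. H (ypt n D i + \<sigma>*u) * pN u 1 \<partial>lborel) \<le> \<sigma>^3 / \<Delta>^3 * m3" .
  have "(\<lambda>x. H x * pN (x - ypt n D i) \<sigma>) = (\<lambda>x. if gridDelta n D \<le> \<bar>x - ypt n D i\<bar> then gk n D \<sigma> i x else 0)"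
    unfolding H_def gk_def \<Delta>_def by auto
  then show ?thesis using s le unfolding \<Delta>_def by simp
qed

end


lemma sum_aux: "(\<Sum>j\<in>S. (R * (b j * F2) + c) / s) = (R * F2 * (\<Sum>j\<in>S. b j) + real (card S) * c) / (s::real)"
  by (simp add: sum_divide_distrib[symmetric] sum.distrib sum_distrib_left algebra_simps)

lemma sum_aux2: "(\<Sum>j\<in>S. (b j * F2 - c) / s) = (F2 * (\<Sum>j\<in>S. b j) - real (card S) * c) / (s::real)"
  by (simp add: sum_divide_distrib[symmetric] sum_subtractf sum_distrib_right sum_distrib_left algebra_simps)

context
  fixes n :: nat and D \<kappa> \<sigma> :: real
  assumes n2: "n \<ge> 2" and Dp: "D > 0" and kp: "\<kappa> > 0" and sp: "\<sigma> > 0"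
    and dle: "2 * (\<kappa> * \<sigma>) \<le> gridDelta n D"
begin

lemmas A5 = n2 Dp kp sp dle

abbreviation "ff \<equiv> shat n D (\<sigma>^2) (\<kappa>*\<sigma>)"

definition hh where "hh x = (ff x - sc n D \<sigma> x)^2 * pt n D (\<sigma>^2) x"
definition UU where "UU j x = (ff x - (ypt n D j - x) / \<sigma>^2)^2 * gk n D \<sigma> j x"
definition LA where "LA j x = indicator {ypt n D j - gridDelta n D ..< ypt n D j + gridDelta n D} x *
            (ff x - (ypt n D j - x) / \<sigma>^2)^2 * gk n D \<sigma> j x"
definition TT where "TT i x = (if gridDelta n D \<le> \<bar>x - ypt n D i\<bar> then gk n D \<sigma> i x else 0)"

lemma Lt_eq: "Lt n D (\<sigma>^2) ff = \<sigma>^2 * (\<integral>x. hh x \<partial>lborel)"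
  unfolding Lt_def hh_def deriv_eq[OF A5] ..

lemma hh_meas: "hh \<in> borel_measurable lborel"
proof -
  have [measurable]: "ff \<in> borel_measurable borel" by (rule f_meas[OF A5])
  show ?thesis unfolding hh_def sc_def Gs_def gk_def pt_def by measurable
qed

lemma hh_nonneg: "hh x \<ge> 0"
  unfolding hh_def pt_eq[OF A5] using Gs_pos[OF A5, of x] by simp

lemma hh_upper: "hh x \<le> (1 / real n) * (\<Sum>j=1..n. UU j x)"
  unfolding hh_def UU_def by (rule upper_pw[OF A5])

lemma int_UU: "j \<in> {1..n} \<Longrightarrow> integrable lborel (UU j)"
  unfolding UU_def using U_int[OF A5] by blast

lemma int_hh: "integrable lborel hh"
proof (rule Bochner_Integration.integrable_bound)
  show "integrable lborel (\<lambda>x. (1 / real n) * (\<Sum>j=1..n. UU j x))"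
    by (intro integrable_mult_right Bochner_Integration.integrable_sum int_UU)
  show "hh \<in> borel_measurable lborel" by (rule hh_meas)
  have "norm (hh x) \<le> norm ((1 / real n) * (\<Sum>j=1..n. UU j x))" for x
  proof -
    have "norm (hh x) = hh x" using hh_nonneg[of x] by simp
    moreover have "(1 / real n) * (\<Sum>j=1..n. UU j x) \<le> norm ((1 / real n) * (\<Sum>j=1..n. UU j x))"
      unfolding real_norm_def by (rule abs_ge_self)
    ultimately show ?thesis using hh_upper[of x] by linarith
  qed
  then show "AE x in lborel. norm (hh x) \<le> norm ((1 / real n) * (\<Sum>j=1..n. UU j x))" by simp
qed

lemma upper_final:
  "Lt n D (\<sigma>^2) ff \<le> rho n D \<kappa> \<sigma>^2 * (real n - 1) / real n * Fk \<kappa> + K1 n D * \<sigma> / gridDelta n D * m3"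
proof -
  have "(\<integral>x. hh x \<partial>lborel) \<le> (\<integral>x. (1 / real n) * (\<Sum>j=1..n. UU j x) \<partial>lborel)"
  proof (rule integral_mono[OF int_hh])
    show "integrable lborel (\<lambda>x. (1 / real n) * (\<Sum>j=1..n. UU j x))"
      by (intro integrable_mult_right Bochner_Integration.integrable_sum int_UU)
    fix x show "hh x \<le> (1 / real n) * (\<Sum>j=1..n. UU j x)" by (rule hh_upper)
  qed
  also have "\<dots> = (1 / real n) * (\<Sum>j=1..n. (\<integral>x. UU j x \<partial>lborel))"
    by (simp add: Bochner_Integration.integral_sum int_UU)
  also have "\<dots> \<le> (1 / real n) * (\<Sum>j=1..n. (rho n D \<kappa> \<sigma>^2 * ((of_bool (j < n) + of_bool (1 < j)) * (Fk \<kappa> / 2))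
                   + K1 n D * \<sigma> / gridDelta n D * m3) / \<sigma>^2)"
  proof (intro mult_left_mono sum_mono)
    fix j assume j: "j \<in> {1..n}"
    have "(\<integral>x. UU j x \<partial>lborel) = (\<integral>u. (Phi n D \<kappa> \<sigma> j u)^2 * pN u 1 \<partial>lborel) / \<sigma>^2"
      unfolding UU_def using U_int[OF A5 j] by blast
    then show "(\<integral>x. UU j x \<partial>lborel) \<le> (rho n D \<kappa> \<sigma>^2 * ((of_bool (j < n) + of_bool (1 < j)) * (Fk \<kappa> / 2))
                   + K1 n D * \<sigma> / gridDelta n D * m3) / \<sigma>^2"
      using integral_Phi_upper[OF A5 j] sp by (simp add: divide_right_mono)
  qed simp
  also have "\<dots> = (1 / real n) * ((rho n D \<kappa> \<sigma>^2 * (Fk \<kappa> / 2) * (2 * (real n - 1))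
                   + real n * (K1 n D * \<sigma> / gridDelta n D * m3)) / \<sigma>^2)"
    unfolding sum_aux sum_sides[OF n2] by simp
  also have "\<dots> = (rho n D \<kappa> \<sigma>^2 * (real n - 1) / real n * Fk \<kappa> + K1 n D * \<sigma> / gridDelta n D * m3) / \<sigma>^2"
    using n2 Dlt_pos[OF n2 Dp] sp by (simp add: field_simps)
  finally show ?thesis unfolding Lt_eq using sp by (simp add: field_simps)
qed

lemma Tf_TT: "Tf n D \<sigma> x = (\<Sum>i=1..n. TT i x)"
  unfolding Tf_def TT_def ..

lemma TT_nonneg: "TT i x \<ge> 0"
  unfolding TT_def using gk_pos[OF A5] by (simp add: less_imp_le)

lemma int_LA: "j \<in> {1..n} \<Longrightarrow> integrable lborel (LA j)"
  unfolding LA_def using LA_int[OF A5] by blast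

lemma int_TT: "i \<in> {1..n} \<Longrightarrow> integrable lborel (TT i)"
  unfolding TT_def using T_int[OF A5] by blast

lemma hh_lower: "hh x \<ge> (1 / real n) * (\<Sum>j=1..n. LA j x) - 4 * D * gridDelta n D / \<sigma>^4 * Tf n D \<sigma> x"
proof -
  define \<Delta> where "\<Delta> = gridDelta n D"
  have Dpos: "\<Delta> > 0" unfolding \<Delta>_def using Dlt_pos[OF n2 Dp] .
  have c0: "4 * D * \<Delta> / \<sigma>^4 * Tf n D \<sigma> x \<ge> 0"
    unfolding Tf_TT using TT_nonneg Dp Dpos sp by (simp add: sum_nonneg)
  show ?thesis
  proof (cases "\<exists>j\<in>{1..n}. ypt n D j - \<Delta> \<le> x \<and> x < ypt n D j + \<Delta>")
    case True
    then obtain j where j: "j \<in> {1..n}" and xA: "ypt n D j - \<Delta> \<le> x" "x < ypt n D j + \<Delta>" by blast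
    have others: "LA k x = 0" if "k \<in> {1..n} - {j}" for k
    proof -
      have "k < j \<or> j < k" using that by auto
      then have "\<not> (ypt n D k - \<Delta> \<le> x \<and> x < ypt n D k + \<Delta>)"
        using y_sep[OF n2 Dp, of k j] y_sep[OF n2 Dp, of j k] xA unfolding \<Delta>_def by auto
      then show ?thesis unfolding LA_def \<Delta>_def by (simp add: indicator_def)
    qed
    have "(\<Sum>k=1..n. LA k x) = LA j x + (\<Sum>k\<in>{1..n}-{j}. LA k x)"
      using j by (simp add: sum.remove)
    also have "(\<Sum>k\<in>{1..n}-{j}. LA k x) = 0" using others by simp
    finally have sumj: "(\<Sum>k=1..n. LA k x) = LA j x" by simp
    have LAj: "LA j x = (ff x - (ypt n D j - x) / \<sigma>^2)^2 * gk n D \<sigma> j x"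
      unfolding LA_def using xA unfolding \<Delta>_def by (simp add: indicator_def)
    have ub: "\<bar>(x - ypt n D j) / \<sigma>\<bar> \<le> gridDelta n D / \<sigma>"
      using xA sp unfolding \<Delta>_def by (auto simp: abs_le_iff divide_right_mono)
    have "\<bar>Phi n D \<kappa> \<sigma> j ((x - ypt n D j) / \<sigma>)\<bar> / \<sigma> \<le> (gridDelta n D / \<sigma>) / \<sigma>"
      using Phi_small[OF A5 j ub] sp by (intro divide_right_mono) auto
    then have "\<bar>Phi n D \<kappa> \<sigma> j ((x - ypt n D j) / \<sigma>) / \<sigma>\<bar> \<le> (gridDelta n D / \<sigma>) / \<sigma>"
      using sp by simp
    then have fb: "\<bar>ff x - (ypt n D j - x) / \<sigma>^2\<bar> \<le> gridDelta n D / \<sigma>^2"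
      unfolding H_eq_x[OF A5] by (simp add: power2_eq_square)
    have "hh x \<ge> (ff x - (ypt n D j - x) / \<sigma>^2)^2 * gk n D \<sigma> j x / real n - 4 * D * gridDelta n D / \<sigma>^4 * Tf n D \<sigma> x"
      unfolding hh_def using lower_pw[OF A5 j xA[unfolded \<Delta>_def] fb] .
    then show ?thesis unfolding sumj LAj by simp
  next
    case False
    then have "LA k x = 0" if "k \<in> {1..n}" for k
      using that unfolding LA_def \<Delta>_def by (auto simp: indicator_def)
    then have "(\<Sum>k=1..n. LA k x) = 0" by simp
    then show ?thesis using hh_nonneg[of x] c0 unfolding \<Delta>_def by simp
  qed
qed

lemma lower_final:
  "Lt n D (\<sigma>^2) ff \<ge> (real n - 1) / real n * Fk \<kappa> - \<sigma> / gridDelta n D * m3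
      - 4 * D * real n * \<sigma> / (gridDelta n D)^2 * m3"
proof -
  define \<Delta> where "\<Delta> = gridDelta n D"
  have Dpos: "\<Delta> > 0" unfolding \<Delta>_def using Dlt_pos[OF n2 Dp] .
  define c where "c = 4 * D * \<Delta> / \<sigma>^4"
  have c0: "c \<ge> 0" unfolding c_def using Dp Dpos sp by simp
  have iL: "integrable lborel (\<lambda>x. (1 / real n) * (\<Sum>j=1..n. LA j x) - c * (\<Sum>i=1..n. TT i x))"
    by (intro Bochner_Integration.integrable_diff integrable_mult_right Bochner_Integration.integrable_sum int_LA int_TT)
  have "(\<integral>x. (1 / real n) * (\<Sum>j=1..n. LA j x) - c * (\<Sum>i=1..n. TT i x) \<partial>lborel) \<le> (\<integral>x. hh x \<partial>lborel)"
  proof (rule integral_mono[OF iL int_hh])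
    fix x show "(1 / real n) * (\<Sum>j=1..n. LA j x) - c * (\<Sum>i=1..n. TT i x) \<le> hh x"
      using hh_lower[of x] unfolding c_def \<Delta>_def Tf_TT .
  qed
  moreover have "(\<integral>x. (1 / real n) * (\<Sum>j=1..n. LA j x) - c * (\<Sum>i=1..n. TT i x) \<partial>lborel)
      = (1 / real n) * (\<Sum>j=1..n. (\<integral>x. LA j x \<partial>lborel)) - c * (\<Sum>i=1..n. (\<integral>x. TT i x \<partial>lborel))"
    by (subst Bochner_Integration.integral_diff)
       (auto intro!: integrable_mult_right Bochner_Integration.integrable_sum int_LA int_TT
             simp: Bochner_Integration.integral_sum int_LA int_TT)
  moreover have "(\<Sum>j=1..n. (\<integral>x. LA j x \<partial>lborel)) \<ge>
      (\<Sum>j=1..n. ((of_bool (j < n) + of_bool (1 < j)) * (Fk \<kappa> / 2) - \<sigma> / \<Delta> * m3) / \<sigma>^2)"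
    by (rule sum_mono) (use LA_int[OF A5] in \<open>auto simp: LA_def \<Delta>_def\<close>)
  moreover have "(\<Sum>i=1..n. (\<integral>x. TT i x \<partial>lborel)) \<le> (\<Sum>i=1..n. \<sigma>^3 / \<Delta>^3 * m3)"
    by (rule sum_mono) (use T_int[OF A5] in \<open>auto simp: TT_def \<Delta>_def\<close>)
  ultimately have "(\<integral>x. hh x \<partial>lborel) \<ge>
      (1 / real n) * (\<Sum>j=1..n. ((of_bool (j < n) + of_bool (1 < j)) * (Fk \<kappa> / 2) - \<sigma> / \<Delta> * m3) / \<sigma>^2)
      - c * (\<Sum>i=1..n. \<sigma>^3 / \<Delta>^3 * m3)"
  proof -
    assume a: "(\<integral>x. (1 / real n) * (\<Sum>j=1..n. LA j x) - c * (\<Sum>i=1..n. TT i x) \<partial>lborel) \<le> (\<integral>x. hh x \<partial>lborel)"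
      and b: "(\<integral>x. (1 / real n) * (\<Sum>j=1..n. LA j x) - c * (\<Sum>i=1..n. TT i x) \<partial>lborel)
      = (1 / real n) * (\<Sum>j=1..n. (\<integral>x. LA j x \<partial>lborel)) - c * (\<Sum>i=1..n. (\<integral>x. TT i x \<partial>lborel))"
      and d: "(\<Sum>j=1..n. (\<integral>x. LA j x \<partial>lborel)) \<ge>
      (\<Sum>j=1..n. ((of_bool (j < n) + of_bool (1 < j)) * (Fk \<kappa> / 2) - \<sigma> / \<Delta> * m3) / \<sigma>^2)"
      and e: "(\<Sum>i=1..n. (\<integral>x. TT i x \<partial>lborel)) \<le> (\<Sum>i=1..n. \<sigma>^3 / \<Delta>^3 * m3)"
    have "(1 / real n) * (\<Sum>j=1..n. ((of_bool (j < n) + of_bool (1 < j)) * (Fk \<kappa> / 2) - \<sigma> / \<Delta> * m3) / \<sigma>^2)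
         \<le> (1 / real n) * (\<Sum>j=1..n. (\<integral>x. LA j x \<partial>lborel))"
      using d by (intro mult_left_mono) auto
    moreover have "c * (\<Sum>i=1..n. (\<integral>x. TT i x \<partial>lborel)) \<le> c * (\<Sum>i=1..n. \<sigma>^3 / \<Delta>^3 * m3)"
      using e c0 by (intro mult_left_mono) auto
    ultimately show ?thesis using a b by linarith
  qed
  also have "(1 / real n) * (\<Sum>j=1..n. ((of_bool (j < n) + of_bool (1 < j)) * (Fk \<kappa> / 2) - \<sigma> / \<Delta> * m3) / \<sigma>^2)
      - c * (\<Sum>i=1..n. \<sigma>^3 / \<Delta>^3 * m3)
      = (1 / real n) * (((Fk \<kappa> / 2) * (2 * (real n - 1)) - real n * (\<sigma> / \<Delta> * m3)) / \<sigma>^2)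
      - c * (real n * (\<sigma>^3 / \<Delta>^3 * m3))"
    unfolding sum_aux2 sum_sides[OF n2] by simp
  also have "\<dots> = ((real n - 1) / real n * Fk \<kappa> - \<sigma> / \<Delta> * m3 - 4 * D * real n * \<sigma> / \<Delta>^2 * m3) / \<sigma>^2"
    unfolding c_def using n2 Dpos sp by (simp add: field_simps power_def)
  finally show ?thesis unfolding Lt_eq \<Delta>_def[symmetric] using sp by (simp add: field_simps)
qed

end


lemma rho_sq_bound:
  fixes \<Delta> \<delta> :: real
  assumes "\<delta> > 0" "2 * \<delta> \<le> \<Delta>"
  shows "(\<Delta> / (\<Delta> - \<delta>))^2 - 1 \<le> 6 * \<delta> / \<Delta>"
proof -
  have p: "\<Delta> - \<delta> > 0" "\<Delta> > 0" using assms by auto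
  define r where "r = \<Delta> / (\<Delta> - \<delta>)"
  have r1: "r - 1 = \<delta> / (\<Delta> - \<delta>)" unfolding r_def using p by (simp add: field_simps)
  have "\<delta> / (\<Delta> - \<delta>) \<le> 2 * \<delta> / \<Delta>" using p assms by (simp add: divide_simps)
  then have a: "r - 1 \<le> 2 * \<delta> / \<Delta>" using r1 by simp
  have r0: "r - 1 \<ge> 0" using r1 p assms by simp
  have b: "r + 1 \<le> 3" unfolding r_def using p assms by (simp add: divide_simps)
  have "r^2 - 1 = (r - 1) * (r + 1)" by (simp add: power2_eq_square algebra_simps)
  also have "\<dots> \<le> (2 * \<delta> / \<Delta>) * 3" using a b r0 p assms by (intro mult_mono) auto
  finally show ?thesis unfolding r_def by simp
qed

lemma bound_sigma:
  fixes n :: nat and D \<kappa> \<sigma> :: real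
  assumes n2: "n \<ge> 2" and Dp: "D > 0" and kp: "\<kappa> > 0" and sp: "\<sigma> > 0"
    and dle: "2 * (\<kappa> * \<sigma>) \<le> gridDelta n D"
  shows "\<bar>Lt n D (\<sigma>^2) (shat n D (\<sigma>^2) (\<kappa>*\<sigma>)) - (real n - 1) / real n * Fk \<kappa>\<bar>
     \<le> (6 * \<kappa> * Fk \<kappa> / gridDelta n D + (2 + 2*D/gridDelta n D)^2 / gridDelta n D * m3 + m3 / gridDelta n D
         + 4 * D * real n / (gridDelta n D)^2 * m3) * \<sigma>"
proof -
  define \<Delta> where "\<Delta> = gridDelta n D"
  have Dpos: "\<Delta> > 0" unfolding \<Delta>_def using Dlt_pos[OF n2 Dp] .
  have F0: "Fk \<kappa> \<ge> 0" by (rule Fk_nonneg)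
  have m0: "m3 \<ge> 0" by (rule m3_nonneg)
  have K1e: "K1 n D = (2 + 2*D/gridDelta n D)^2" by (rule K1_def[OF n2 Dp kp sp dle])
  have rhoe: "rho n D \<kappa> \<sigma> = gridDelta n D / (gridDelta n D - \<kappa> * \<sigma>)" by (rule rho_def[OF n2 Dp kp sp dle])
  have K0: "K1 n D \<ge> 0" unfolding K1e by simp
  have up: "Lt n D (\<sigma>^2) (shat n D (\<sigma>^2) (\<kappa>*\<sigma>)) \<le> rho n D \<kappa> \<sigma>^2 * (real n - 1) / real n * Fk \<kappa> + K1 n D * \<sigma> / \<Delta> * m3"
    using upper_final[OF n2 Dp kp sp dle] unfolding \<Delta>_def .
  have lo: "Lt n D (\<sigma>^2) (shat n D (\<sigma>^2) (\<kappa>*\<sigma>)) \<ge> (real n - 1) / real n * Fk \<kappa> - \<sigma> / \<Delta> * m3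
      - 4 * D * real n * \<sigma> / \<Delta>^2 * m3"
    using lower_final[OF n2 Dp kp sp dle] unfolding \<Delta>_def .
  have rb: "rho n D \<kappa> \<sigma>^2 - 1 \<le> 6 * (\<kappa>*\<sigma>) / \<Delta>"
    unfolding rhoe \<Delta>_def using rho_sq_bound[of "\<kappa>*\<sigma>" "gridDelta n D"] sp kp dle by simp
  have q: "0 \<le> (real n - 1) / real n" "(real n - 1) / real n \<le> 1" using n2 by auto
  have "rho n D \<kappa> \<sigma>^2 * (real n - 1) / real n * Fk \<kappa> - (real n - 1) / real n * Fk \<kappa>
      = (rho n D \<kappa> \<sigma>^2 - 1) * ((real n - 1) / real n * Fk \<kappa>)" using n2 by (simp add: field_simps)
  also have "\<dots> \<le> (6 * (\<kappa>*\<sigma>) / \<Delta>) * ((real n - 1) / real n * Fk \<kappa>)"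
    by (rule mult_right_mono[OF rb]) (rule mult_nonneg_nonneg[OF q(1) F0])
  also have "\<dots> \<le> (6 * (\<kappa>*\<sigma>) / \<Delta>) * Fk \<kappa>"
  proof (rule mult_left_mono)
    show "(real n - 1) / real n * Fk \<kappa> \<le> Fk \<kappa>" using mult_right_mono[OF q(2) F0] by simp
    show "0 \<le> 6 * (\<kappa>*\<sigma>) / \<Delta>" using kp sp Dpos by simp
  qed
  finally have ex: "rho n D \<kappa> \<sigma>^2 * (real n - 1) / real n * Fk \<kappa> - (real n - 1) / real n * Fk \<kappa>
      \<le> 6 * \<kappa> * Fk \<kappa> / \<Delta> * \<sigma>" by (simp add: algebra_simps)
  have e1: "K1 n D * \<sigma> / \<Delta> * m3 = K1 n D / \<Delta> * m3 * \<sigma>" by simp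
  have e2: "\<sigma> / \<Delta> * m3 = m3 / \<Delta> * \<sigma>" by simp
  have e3: "4 * D * real n * \<sigma> / \<Delta>^2 * m3 = 4 * D * real n / \<Delta>^2 * m3 * \<sigma>" by simp
  have nn: "0 \<le> 6 * \<kappa> * Fk \<kappa> / \<Delta> * \<sigma>" "0 \<le> K1 n D / \<Delta> * m3 * \<sigma>" "0 \<le> m3 / \<Delta> * \<sigma>"
     "0 \<le> 4 * D * real n / \<Delta>^2 * m3 * \<sigma>"
    using kp F0 Dpos sp K0 m0 Dp by auto
  have "\<bar>Lt n D (\<sigma>^2) (shat n D (\<sigma>^2) (\<kappa>*\<sigma>)) - (real n - 1) / real n * Fk \<kappa>\<bar>
     \<le> (6 * \<kappa> * Fk \<kappa> / \<Delta> + K1 n D / \<Delta> * m3 + m3 / \<Delta> + 4 * D * real n / \<Delta>^2 * m3) * \<sigma>"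
    using up lo ex nn unfolding e1 e2 e3 by (simp add: abs_le_iff algebra_simps)
  then show ?thesis unfolding \<Delta>_def K1e .
qed

theorem mainTheorem2:
  fixes n :: nat and D \<kappa> :: real
  assumes "n \<ge> 2" and "D > 0" and "\<kappa> > 0"
  shows "\<exists>t1 > 0. \<exists>C > 0. \<forall>t. 0 < t \<and> t < t1 \<longrightarrow>
           \<kappa> * sqrt t < gridDelta n D \<and>
           \<bar>Lt n D t (shat n D t (\<kappa> * sqrt t)) - (real n - 1) / real n * Fk \<kappa>\<bar> \<le> C * sqrt t"
proof -
  note n2 = assms(1) and Dp = assms(2) and kp = assms(3)
  define \<Delta> where "\<Delta> = gridDelta n D"
  have Dpos: "\<Delta> > 0" unfolding \<Delta>_def using Dlt_pos[OF n2 Dp] .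
  define C0 where "C0 = 6 * \<kappa> * Fk \<kappa> / gridDelta n D + (2 + 2*D/gridDelta n D)^2 / gridDelta n D * m3 + m3 / gridDelta n D
         + 4 * D * real n / (gridDelta n D)^2 * m3"
  have C0: "C0 \<ge> 0" unfolding C0_def using kp Fk_nonneg[of \<kappa>] Dlt_pos[OF n2 Dp] m3_nonneg Dp
    by (intro add_nonneg_nonneg) auto
  have T0: "(\<Delta> / (2*\<kappa>))^2 > 0" using Dpos kp by simp
  have C1: "C0 + 1 > 0" using C0 by simp
  have main: "\<kappa> * sqrt t < gridDelta n D \<and>
           \<bar>Lt n D t (shat n D t (\<kappa> * sqrt t)) - (real n - 1) / real n * Fk \<kappa>\<bar> \<le> (C0 + 1) * sqrt t"
    if t: "0 < t \<and> t < (\<Delta> / (2*\<kappa>))^2" for t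
  proof -
    define \<sigma> where "\<sigma> = sqrt t"
    have sp: "\<sigma> > 0" unfolding \<sigma>_def using t by simp
    have tt: "t = \<sigma>^2" unfolding \<sigma>_def using t by simp
    have "\<sigma> < \<Delta> / (2*\<kappa>)"
    proof -
      have "sqrt t < sqrt ((\<Delta> / (2*\<kappa>))^2)" using t by (subst real_sqrt_less_iff) simp
      then show ?thesis unfolding \<sigma>_def using Dpos kp by simp
    qed
    then have lt: "2 * (\<kappa> * \<sigma>) < \<Delta>" using kp by (simp add: field_simps)
    then have A: "\<kappa> * sqrt t < gridDelta n D" unfolding \<sigma>_def[symmetric] \<Delta>_def[symmetric]
      using kp sp by (smt (verit) mult_pos_pos)
    have dle: "2 * (\<kappa> * \<sigma>) \<le> gridDelta n D" using lt unfolding \<Delta>_def by simp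
    have "\<bar>Lt n D t (shat n D t (\<kappa> * sqrt t)) - (real n - 1) / real n * Fk \<kappa>\<bar> \<le> C0 * \<sigma>"
    proof -
      have st: "sqrt t = \<sigma>" unfolding \<sigma>_def ..
      show ?thesis unfolding st unfolding tt C0_def using bound_sigma[OF n2 Dp kp sp dle] .
    qed
    also have "\<dots> \<le> (C0 + 1) * \<sigma>" using sp by simp
    finally have B0: "\<bar>Lt n D t (shat n D t (\<kappa> * sqrt t)) - (real n - 1) / real n * Fk \<kappa>\<bar> \<le> (C0 + 1) * \<sigma>" .
    then have B: "\<bar>Lt n D t (shat n D t (\<kappa> * sqrt t)) - (real n - 1) / real n * Fk \<kappa>\<bar> \<le> (C0 + 1) * sqrt t"
      by (simp only: \<sigma>_def)
    show ?thesis using A B by blast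
  qed
  show ?thesis using T0 C1 main by blast
qed


end
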